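(* Let $0<p<q$ be relatively prime integers, let $\mathcal{G}_\gamma$ be the Markov snake graph of slope $p/q$, let $m=m(\mathcal{G}_\gamma)$ be its number of perfect matchings, and let $\mathcal{G}^\circ(m)$ be the associated Markov band graph. Then the number of perfect matchings of $\mathcal{G}^\circ(m)$ is $3m$.
   Context: A tile is a unit square in the plane with sides parallel to the axes, viewed as a graph with 4 vertices and 4 edges. A snake graph with $d\ge1$ tiles is the union of tiles $G_1,\dots,G_d$ with each $G_{i+1}$ the translate of $G_i$ by $(0,1)$ or $(1,0)$, so that $G_i,G_{i+1}$ share exactly one edge $e_i$. A sign function on a snake graph is a map $f$ from edges to $\{+,-\}$ such that in each tile the north and west edges have the same sign, the south and east edges have the same sign, and north and south edges have opposite signs. For positive integers $a_1,\dots,a_n$ with $d=a_1+\dots+a_n-1\ge1$, $\mathcal{G}[a_1,\dots,a_n]$ is the unique snake graph with tiles $G_1,\dots,G_d$ admitting a sign function $f$ and an edge $e_d\in\{\text{north edge of }G_d,\text{east edge of }G_d\}$ such that, with $e_0$ the south edge of $G_1$, the sequence $(f(e_0),\dots,f(e_d))$ consists of $a_1$ copies of a sign $s$, then $a_2$ copies of $-s$, then $a_3$ copies of $s$, etc. For relatively prime integers $0<p<q$ put $v_i=\lfloor iq/p\rfloor-\lfloor (i-1)q/p\rfloor$ for $1\le i\le p-1$ and $v_p=q-1-\lfloor (p-1)q/p\rfloor$. The Markov snake graph of slope $p/q$ is $\mathcal{G}[c]$, where $c$ is the sequence $2,\,1^{2(v_1-1)},\,2,2,\,1^{2(v_2-1)},\,2,2,\dots,2,2,\,1^{2(v_p-1)},\,2$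 (here $1^k$ denotes $k$ consecutive entries equal to $1$). Its tiles $G_1,\dots,G_d$ begin and end with horizontal steps ($G_2$ is east of $G_1$ and $G_d$ is east of $G_{d-1}$). The Markov band graph $\mathcal{G}^\circ(m)$ is obtained from $\mathcal{G}_\gamma$ by adding a tile $G_{d+1}$ east of $G_d$, a tile $G_{d+2}$ east of $G_{d+1}$ and a tile $G_{d+3}$ north of $G_{d+2}$, and then identifying the north edge of $G_{d+3}$ with the south edge of $G_1$, where the northeast vertex of $G_{d+3}$ is identified with the southwest vertex of $G_1$ and the northwest vertex of $G_{d+3}$ with the southeast vertex of $G_1$. A perfect matching of a graph is a set of edges such that every vertex is incident to exactly one of them. *)

theory Defs
  imports Main
begin

(* Points of the integer lattice; an edge is the 2-element set of its endpoints. *)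
type_synonym point = "int \<times> int"
type_synonym edge = "point set"

datatype dir = East | North

fun step :: "dir \<Rightarrow> point \<Rightarrow> point" where
  "step East (x, y) = (x + 1, y)"
| "step North (x, y) = (x, y + 1)"

(* A snake graph with tiles G_1,...,G_d is encoded by the list ds of its d-1 steps;
   G_1 has its southwest corner at (0,0).  Tile index i (0-based) is G_{i+1};
   tile_pos ds i is the southwest corner of G_{i+1}. *)
fun tile_pos :: "dir list \<Rightarrow> nat \<Rightarrow> point" where
  "tile_pos ds 0 = (0, 0)"
| "tile_pos ds (Suc i) = step (ds ! i) (tile_pos ds i)"

definition south_edge :: "point \<Rightarrow> edge" where
  "south_edge p = {(fst p, snd p), (fst p + 1, snd p)}"
definition north_edge :: "point \<Rightarrow> edge" where
  "north_edge p = {(fst p, snd p + 1), (fst p + 1, snd p + 1)}"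
definition west_edge :: "point \<Rightarrow> edge" where
  "west_edge p = {(fst p, snd p), (fst p, snd p + 1)}"
definition east_edge :: "point \<Rightarrow> edge" where
  "east_edge p = {(fst p + 1, snd p), (fst p + 1, snd p + 1)}"

definition tile_corners :: "point \<Rightarrow> point set" where
  "tile_corners p = {(fst p, snd p), (fst p + 1, snd p), (fst p, snd p + 1), (fst p + 1, snd p + 1)}"

definition tile_edges :: "point \<Rightarrow> edge set" where
  "tile_edges p = {south_edge p, north_edge p, west_edge p, east_edge p}"

definition ntiles :: "dir list \<Rightarrow> nat" where
  "ntiles ds = length ds + 1"

definition snake_vertices :: "dir list \<Rightarrow> point set" where
  "snake_vertices ds = (\<Union>i<ntiles ds. tile_corners (tile_pos ds i))"

definition snake_edges :: "dir list \<Rightarrow> edge set" where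
  "snake_edges ds = (\<Union>i<ntiles ds. tile_edges (tile_pos ds i))"

(* Sign function (signs + = True, - = False) *)
definition is_sign_function :: "dir list \<Rightarrow> (edge \<Rightarrow> bool) \<Rightarrow> bool" where
  "is_sign_function ds f \<longleftrightarrow>
     (\<forall>i<ntiles ds. let p = tile_pos ds i in
        f (north_edge p) = f (west_edge p) \<and> f (south_edge p) = f (east_edge p)
        \<and> f (north_edge p) \<noteq> f (south_edge p))"

(* interior edge e_i shared by G_i and G_{i+1}, for 1 \<le> i \<le> d-1 *)
definition interior_edge :: "dir list \<Rightarrow> nat \<Rightarrow> edge" where
  "interior_edge ds i =
     (if ds ! (i - 1) = North then north_edge (tile_pos ds (i - 1))
      else east_edge (tile_pos ds (i - 1)))"

definition sign_pattern :: "nat list \<Rightarrow> bool \<Rightarrow> bool list" where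
  "sign_pattern as s = concat (map (\<lambda>k. replicate (as ! k) (if even k then s else \<not> s)) [0..<length as])"

(* ds is a snake graph with d = a_1+...+a_n-1 tiles satisfying the defining property of G[a_1,...,a_n] *)
definition cf_snake_prop :: "nat list \<Rightarrow> dir list \<Rightarrow> bool" where
  "cf_snake_prop as ds \<longleftrightarrow>
     ntiles ds = sum_list as - 1 \<and>
     (\<exists>f ed s. is_sign_function ds f \<and>
        ed \<in> {north_edge (tile_pos ds (ntiles ds - 1)), east_edge (tile_pos ds (ntiles ds - 1))} \<and>
        map f ([south_edge (tile_pos ds 0)] @ map (interior_edge ds) [1..<ntiles ds] @ [ed])
          = sign_pattern as s)"

definition cf_snake :: "nat list \<Rightarrow> dir list" where
  "cf_snake as = (THE ds. cf_snake_prop as ds)"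

definition markov_v :: "nat \<Rightarrow> nat \<Rightarrow> nat \<Rightarrow> nat" where
  "markov_v p q i =
     (if i < p then (i * q) div p - ((i - 1) * q) div p
      else q - 1 - ((p - 1) * q) div p)"

definition markov_seq :: "nat \<Rightarrow> nat \<Rightarrow> nat list" where
  "markov_seq p q = concat (map (\<lambda>i. [2] @ replicate (2 * (markov_v p q i - 1)) 1 @ [2]) [1..<p + 1])"

definition markov_snake :: "nat \<Rightarrow> nat \<Rightarrow> dir list" where
  "markov_snake p q = cf_snake (markov_seq p q)"

(* Band graph: add G_{d+1} east of G_d, G_{d+2} east of G_{d+1}, G_{d+3} north of G_{d+2},
   then identify NE corner of G_{d+3} with SW corner of G_1 and NW corner of G_{d+3}
   with SE corner of G_1 (hence north edge of G_{d+3} with south edge of G_1). *)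
definition band_ext :: "dir list \<Rightarrow> dir list" where
  "band_ext ds = ds @ [East, East, North]"

definition band_glue :: "dir list \<Rightarrow> point \<Rightarrow> point" where
  "band_glue ds v =
     (let t = tile_pos (band_ext ds) (ntiles ds + 2) in
      if v = (fst t + 1, snd t + 1) then (0, 0)
      else if v = (fst t, snd t + 1) then (1, 0)
      else v)"

definition band_vertices :: "dir list \<Rightarrow> point set" where
  "band_vertices ds = band_glue ds ` snake_vertices (band_ext ds)"

definition band_edges :: "dir list \<Rightarrow> edge set" where
  "band_edges ds = (\<lambda>e. band_glue ds ` e) ` snake_edges (band_ext ds)"

definition perfect_matchings :: "'v set \<Rightarrow> 'v set set \<Rightarrow> 'v set set set" where
  "perfect_matchings V E = {M. M \<subseteq> E \<and> (\<forall>v\<in>V. \<exists>!e. e \<in> M \<and> v \<in> e)}"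

end

theory Submission
  imports Defs
begin


definition wfg :: "'v set \<Rightarrow> 'v set set \<Rightarrow> bool" where
  "wfg V E \<longleftrightarrow> finite V \<and> (\<forall>e\<in>E. \<exists>a b. a \<noteq> b \<and> e = {a,b} \<and> a \<in> V \<and> b \<in> V)"

lemma wfg_finE: "wfg V E \<Longrightarrow> finite E"
proof -
  assume "wfg V E"
  then have "E \<subseteq> Pow V" "finite V" unfolding wfg_def by auto
  then show ?thesis by (meson finite_Pow_iff finite_subset)
qed

lemma pm_fin: "wfg V E \<Longrightarrow> finite (perfect_matchings V E)"
proof -
  assume "wfg V E"
  then have "finite (Pow E)" using wfg_finE by blast
  moreover have "perfect_matchings V E \<subseteq> Pow E" unfolding perfect_matchings_def by auto
  ultimately show ?thesis using finite_subset by blast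
qed

lemma wfg_restrict: "wfg V E \<Longrightarrow> wfg (V - X) {f\<in>E. f \<inter> X = {}}"
  unfolding wfg_def by fastforce

lemma wfg_mono: "wfg V E \<Longrightarrow> E' \<subseteq> E \<Longrightarrow> wfg V E'"
  unfolding wfg_def by blast

lemma pm_dead: "v \<in> V \<Longrightarrow> \<forall>e\<in>E. v \<notin> e \<Longrightarrow> perfect_matchings V E = {}"
  unfolding perfect_matchings_def by blast

lemma pm_iff: "M \<in> perfect_matchings V E \<longleftrightarrow> M \<subseteq> E \<and> (\<forall>v\<in>V. \<exists>e\<in>M. v \<in> e)
   \<and> (\<forall>v\<in>V. \<forall>e1\<in>M. \<forall>e2\<in>M. v \<in> e1 \<longrightarrow> v \<in> e2 \<longrightarrow> e1 = e2)"
  unfolding perfect_matchings_def by (auto; metis)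

lemma pm_split:
  assumes wf: "wfg V E" and xE: "x \<in> E"
  shows "card (perfect_matchings V E) = card (perfect_matchings V (E - {x}))
           + card (perfect_matchings (V - x) {f\<in>E. f \<inter> x = {}})"
proof -
  obtain a b where ab: "a \<noteq> b" "x = {a,b}" "a \<in> V" "b \<in> V" using wf xE unfolding wfg_def by blast
  let ?P = "perfect_matchings V E"
  let ?A = "{M\<in>?P. x \<notin> M}"
  let ?B = "{M\<in>?P. x \<in> M}"
  let ?F = "{f\<in>E. f \<inter> x = {}}"
  have fin: "finite ?P" using pm_fin[OF wf] .
  have e: "?P = ?A \<union> ?B" by blast
  have "card (?A \<union> ?B) = card ?A + card ?B"
    by (rule card_Un_disjoint) (use fin in auto)
  then have c1: "card ?P = card ?A + card ?B" using e by simp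
  have A: "?A = perfect_matchings V (E - {x})"
  proof (intro set_eqI iffI)
    fix M assume "M \<in> ?A" then show "M \<in> perfect_matchings V (E - {x})" unfolding pm_iff by blast
  next
    fix M assume "M \<in> perfect_matchings V (E - {x})" then show "M \<in> ?A" unfolding pm_iff by blast
  qed
  have B: "?B = insert x ` perfect_matchings (V - x) ?F"
  proof
    show "?B \<subseteq> insert x ` perfect_matchings (V - x) ?F"
    proof
      fix M assume M: "M \<in> ?B"
      then have ME: "M \<subseteq> E" and cov: "\<forall>v\<in>V. \<exists>e\<in>M. v \<in> e"
        and un: "\<forall>v\<in>V. \<forall>e1\<in>M. \<forall>e2\<in>M. v \<in> e1 \<longrightarrow> v \<in> e2 \<longrightarrow> e1 = e2" and xM: "x \<in> M"
        unfolding pm_iff by auto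
      have disj: "f \<inter> x = {}" if "f \<in> M" "f \<noteq> x" for f
      proof (rule ccontr)
        assume "f \<inter> x \<noteq> {}"
        then obtain w where w: "w \<in> f" "w \<in> x" by blast
        then have "w \<in> V" using ab by auto
        then show False using un w xM that by blast
      qed
      have "M - {x} \<in> perfect_matchings (V - x) ?F"
        unfolding pm_iff
      proof (intro conjI ballI)
        show "M - {x} \<subseteq> ?F" using ME disj by blast
        fix v assume v: "v \<in> V - x"
        then show "\<exists>e\<in>M - {x}. v \<in> e" using cov by blast
      next
        fix v e1 e2 assume "v \<in> V - x" "e1 \<in> M - {x}" "e2 \<in> M - {x}"
        then show "v \<in> e1 \<longrightarrow> v \<in> e2 \<longrightarrow> e1 = e2" using un by blast
      qed
      moreover have "M = insert x (M - {x})" using xM by blast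
      ultimately show "M \<in> insert x ` perfect_matchings (V - x) ?F" by blast
    qed
  next
    show "insert x ` perfect_matchings (V - x) ?F \<subseteq> ?B"
    proof
      fix N assume "N \<in> insert x ` perfect_matchings (V - x) ?F"
      then obtain M where N: "N = insert x M" and MP: "M \<in> perfect_matchings (V - x) ?F"
        by blast
      have M: "M \<subseteq> ?F" "\<forall>v\<in>V - x. \<exists>e\<in>M. v \<in> e"
         "\<forall>v\<in>V - x. \<forall>e1\<in>M. \<forall>e2\<in>M. v \<in> e1 \<longrightarrow> v \<in> e2 \<longrightarrow> e1 = e2"
        using MP unfolding pm_iff by auto
      have "N \<subseteq> E" using N M xE by blast
      moreover have "\<forall>v\<in>V. \<exists>e\<in>N. v \<in> e"
      proof
        fix v assume "v \<in> V"
        then show "\<exists>e\<in>N. v \<in> e" using N M(2) by (cases "v \<in> x") auto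
      qed
      moreover have "\<forall>v\<in>V. \<forall>e1\<in>N. \<forall>e2\<in>N. v \<in> e1 \<longrightarrow> v \<in> e2 \<longrightarrow> e1 = e2"
      proof (intro ballI impI)
        fix v e1 e2 assume v: "v \<in> V" and e: "e1 \<in> N" "e2 \<in> N" "v \<in> e1" "v \<in> e2"
        show "e1 = e2"
        proof (cases "v \<in> x")
          case True
          then have "e1 = x" "e2 = x" using e N M(1) by blast+
          then show ?thesis by simp
        next
          case False
          then have "e1 \<noteq> x" "e2 \<noteq> x" using e by blast+
          then have "e1 \<in> M" "e2 \<in> M" using e N by blast+
          then show ?thesis using M(3) v False e by blast
        qed
      qed
      ultimately have "N \<in> perfect_matchings V E" unfolding pm_iff by blast
      then show "N \<in> ?B" using N by blast
    qed
  qed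
  have inj: "inj_on (insert x) (perfect_matchings (V - x) ?F)"
  proof (rule inj_onI)
    fix M1 M2 assume "M1 \<in> perfect_matchings (V - x) ?F" "M2 \<in> perfect_matchings (V - x) ?F" "insert x M1 = insert x M2"
    moreover have "x \<notin> M1" "x \<notin> M2" using calculation ab unfolding pm_iff by auto
    ultimately show "M1 = M2" by (metis insert_ident)
  qed
  show ?thesis using c1 A B card_image[OF inj] by simp
qed


lemma pmD: assumes "M \<in> perfect_matchings V E"
  shows "M \<subseteq> E" "\<And>v. v \<in> V \<Longrightarrow> \<exists>e\<in>M. v \<in> e"
    "\<And>v e1 e2. v \<in> V \<Longrightarrow> e1 \<in> M \<Longrightarrow> e2 \<in> M \<Longrightarrow> v \<in> e1 \<Longrightarrow> v \<in> e2 \<Longrightarrow> e1 = e2"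
  using assms unfolding pm_iff by blast+
lemma pmI: assumes "M \<subseteq> E" "\<And>v. v \<in> V \<Longrightarrow> \<exists>e\<in>M. v \<in> e"
    "\<And>v e1 e2. v \<in> V \<Longrightarrow> e1 \<in> M \<Longrightarrow> e2 \<in> M \<Longrightarrow> v \<in> e1 \<Longrightarrow> v \<in> e2 \<Longrightarrow> e1 = e2"
  shows "M \<in> perfect_matchings V E"
  using assms unfolding pm_iff by blast


lemma pm_add_edge:
  assumes wf: "wfg V E" and ab: "a \<noteq> b" "a \<in> V" "b \<in> V" and nE: "{a,b} \<notin> E"
  shows "card (perfect_matchings V (insert {a,b} E)) = card (perfect_matchings V E)
           + card (perfect_matchings (V - {a,b}) {f\<in>E. f \<inter> {a,b} = {}})"
proof -
  have wf2: "wfg V (insert {a,b} E)" using wf ab unfolding wfg_def by blast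
  have "insert {a,b} E - {{a,b}} = E" using nE by blast
  moreover have "{f\<in>insert {a,b} E. f \<inter> {a,b} = {}} = {f\<in>E. f \<inter> {a,b} = {}}" by auto
  ultimately show ?thesis using pm_split[OF wf2, of "{a,b}"] by simp
qed



lemma pm_pendant:
  assumes wf: "wfg V E" and xE: "x \<in> E" and w: "w \<in> x" "w \<in> V" and only: "\<forall>e\<in>E. w \<in> e \<longrightarrow> e = x"
  shows "card (perfect_matchings V E) = card (perfect_matchings (V - x) {f\<in>E. f \<inter> x = {}})"
proof -
  have "perfect_matchings V (E - {x}) = {}"
    by (rule pm_dead[OF w(2)]) (use only in blast)
  then show ?thesis using pm_split[OF wf xE] by simp
qed



lemma pm_iso:
  assumes inj: "inj h"
  shows "card (perfect_matchings (h ` V) ((`) h ` E)) = card (perfect_matchings V E)"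
proof -
  let ?H = "\<lambda>M. (`) h ` M"
  have injH: "inj (image h)" using inj by (simp add: inj_image_eq_iff inj_def)
  have injHH: "inj ?H" using injH by (simp add: inj_image_eq_iff inj_def)
  have eq: "perfect_matchings (h ` V) ((`) h ` E) = ?H ` perfect_matchings V E"
  proof (intro set_eqI iffI)
    fix N assume N: "N \<in> perfect_matchings (h ` V) ((`) h ` E)"
    let ?M = "{e\<in>E. h ` e \<in> N}"
    note NE = pmD(1)[OF N]
    have "N = ?H ?M"
    proof (intro set_eqI iffI)
      fix e' assume "e' \<in> N"
      then obtain e where "e \<in> E" "e' = h ` e" using NE by auto
      then show "e' \<in> ?H ?M" using \<open>e' \<in> N\<close> by auto
    next
      fix e' assume "e' \<in> ?H ?M" then show "e' \<in> N" by auto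
    qed
    moreover have "?M \<in> perfect_matchings V E"
    proof (rule pmI)
      show "?M \<subseteq> E" by auto
    next
      fix v assume v: "v \<in> V"
      then have "h v \<in> h ` V" by simp
      then obtain e' where e': "e' \<in> N" "h v \<in> e'" using pmD(2)[OF N] by meson
      then obtain e where e: "e \<in> E" "e' = h ` e" using NE by auto
      then have "v \<in> e" using e' inj by (simp add: inj_image_mem_iff)
      then show "\<exists>e\<in>?M. v \<in> e" using e e' by auto
    next
      fix v e1 e2 assume v: "v \<in> V" and e: "e1 \<in> ?M" "e2 \<in> ?M" "v \<in> e1" "v \<in> e2"
      have "h v \<in> h ` V" "h ` e1 \<in> N" "h ` e2 \<in> N" "h v \<in> h ` e1" "h v \<in> h ` e2" using v e by auto
      then have "h ` e1 = h ` e2" by (rule pmD(3)[OF N])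
      then show "e1 = e2" using injH by (simp add: inj_eq)
    qed
    ultimately show "N \<in> ?H ` perfect_matchings V E" by (rule image_eqI)
  next
    fix N assume "N \<in> ?H ` perfect_matchings V E"
    then obtain M where N: "N = ?H M" and MP: "M \<in> perfect_matchings V E" by (rule imageE)
    show "N \<in> perfect_matchings (h ` V) ((`) h ` E)"
    proof (rule pmI)
      show "N \<subseteq> (`) h ` E" using N pmD(1)[OF MP] by auto
    next
      fix v assume "v \<in> h ` V"
      then obtain w where w: "w \<in> V" "v = h w" by auto
      then obtain e where "e \<in> M" "w \<in> e" using pmD(2)[OF MP] by meson
      then show "\<exists>e\<in>N. v \<in> e" using w N by auto
    next
      fix v e1 e2 assume v: "v \<in> h ` V" and e: "e1 \<in> N" "e2 \<in> N" "v \<in> e1" "v \<in> e2"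
      then obtain w where w: "w \<in> V" "v = h w" by auto
      obtain f1 where f1: "f1 \<in> M" "e1 = h ` f1" using e N by auto
      obtain f2 where f2: "f2 \<in> M" "e2 = h ` f2" using e N by auto
      have "w \<in> f1" "w \<in> f2" using e w inj f1 f2 by (auto simp: inj_image_mem_iff)
      then have "f1 = f2" using pmD(3)[OF MP] f1 f2 w by meson
      then show "e1 = e2" using f1 f2 by simp
    qed
  qed
  have "inj_on ?H (perfect_matchings V E)" using injHH inj_on_subset subset_UNIV by metis
  then show ?thesis unfolding eq by (rule card_image)
qed


lemma pm_parity:
  assumes wf: "wfg V E" and col: "\<And>e a b. e \<in> E \<Longrightarrow> a \<in> e \<Longrightarrow> b \<in> e \<Longrightarrow> a \<noteq> b \<Longrightarrow> c a \<noteq> c b"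
    and ne: "perfect_matchings V E \<noteq> {}"
  shows "card {w\<in>V. c w} = card {w\<in>V. \<not> c w}"
proof -
  obtain M where MP: "M \<in> perfect_matchings V E" using ne by blast
  note ME = pmD(1)[OF MP] and cov = pmD(2)[OF MP] and un = pmD(3)[OF MP]
  have key: "card {w\<in>V. c w = t} = card M" for t
  proof -
    define g where "g w = (THE e. e \<in> M \<and> w \<in> e)" for w
    have g: "g w \<in> M \<and> w \<in> g w" if wV: "w \<in> V" for w
    proof -
      obtain e where e: "e \<in> M" "w \<in> e" using cov[OF wV] by blast
      have uq: "e' = e" if "e' \<in> M \<and> w \<in> e'" for e'
      proof -
        have "e' \<in> M" "w \<in> e'" using that by auto
        from un[OF wV this(1) e(1) this(2) e(2)] show ?thesis .
      qed
      have "g w = e" unfolding g_def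
      proof (rule the_equality)
        show "e \<in> M \<and> w \<in> e" using e by simp
      next
        fix e' assume "e' \<in> M \<and> w \<in> e'" then show "e' = e" by (rule uq)
      qed
      then show ?thesis using e by simp
    qed
    have gu: "g w = e" if h: "w \<in> V" "e \<in> M" "w \<in> e" for w e
    proof -
      have "g w \<in> M" "w \<in> g w" using g[OF h(1)] by auto
      from un[OF h(1) this(1) h(2) this(2) h(3)] show ?thesis .
    qed
    have "inj_on g {w\<in>V. c w = t}"
    proof (rule inj_onI)
      fix w1 w2 assume w: "w1 \<in> {w\<in>V. c w = t}" "w2 \<in> {w\<in>V. c w = t}" "g w1 = g w2"
      then have "w1 \<in> g w1" "w2 \<in> g w1" "g w1 \<in> E" using g ME by auto
      moreover have "c w1 = c w2" using w by simp
      ultimately show "w1 = w2" using col by metis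
    qed
    moreover have "g ` {w\<in>V. c w = t} = M"
    proof
      show "g ` {w\<in>V. c w = t} \<subseteq> M" using g by auto
    next
      show "M \<subseteq> g ` {w\<in>V. c w = t}"
      proof
        fix e assume e: "e \<in> M"
        then have "e \<in> E" using ME by auto
        then obtain a b where ab: "a \<noteq> b" "e = {a,b}" "a \<in> V" "b \<in> V" using wf unfolding wfg_def by meson
        then have "c a \<noteq> c b" using col \<open>e \<in> E\<close> by simp
        then have "\<exists>w\<in>e. w \<in> V \<and> c w = t" using ab by (cases "c a = t") auto
        then obtain w where w: "w \<in> e" "w \<in> V" "c w = t" by blast
        then have "g w = e" using gu e by simp
        then show "e \<in> g ` {w\<in>V. c w = t}" using w by auto
      qed
    qed
    ultimately show ?thesis using card_image by metis
  qed
  show ?thesis using key[of True] key[of False] by simp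
qed


definition Qg :: "'v set \<Rightarrow> 'v set set \<Rightarrow> 'v set \<Rightarrow> nat" where
  "Qg V E X = card (perfect_matchings (V - X) {f\<in>E. f \<inter> X = {}})"

lemma restrict_restrict: "{f \<in> {f\<in>E. f \<inter> X = {}}. f \<inter> Y = {}} = {f\<in>E. f \<inter> (X \<union> Y) = {}}"
  by blast

locale tadd =
  fixes V :: "'v set" and E u v u' v'
  assumes wf: "wfg V E" and uV: "u \<in> V" and vV: "v \<in> V" and uv: "u \<noteq> v"
    and u'V: "u' \<notin> V" and v'V: "v' \<notin> V" and u'v': "u' \<noteq> v'"
    and sub: "\<And>e. e \<in> E \<Longrightarrow> e \<subseteq> V"
begin

definition "V2 = V \<union> {u', v'}"
definition "E2 = E \<union> {{u, u'}, {v, v'}, {u', v'}}"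

lemma neqs: "u \<noteq> u'" "u \<noteq> v'" "v \<noteq> u'" "v \<noteq> v'"
  using uV vV u'V v'V by auto

lemma wf2: "wfg V2 E2"
  unfolding wfg_def
proof (intro conjI ballI)
  show "finite V2" using wf unfolding wfg_def V2_def by auto
next
  fix e assume "e \<in> E2"
  then consider "e \<in> E" | "e = {u, u'}" | "e = {v, v'}" | "e = {u', v'}" unfolding E2_def by auto
  then show "\<exists>a b. a \<noteq> b \<and> e = {a, b} \<and> a \<in> V2 \<and> b \<in> V2"
  proof cases
    case 1
    then obtain a b where "a \<noteq> b" "e = {a, b}" "a \<in> V" "b \<in> V" using wf unfolding wfg_def by meson
    then show ?thesis unfolding V2_def by blast
  qed (use uV vV neqs u'v' in \<open>auto simp: V2_def\<close>)
qed

lemma notin_old: "e \<in> E \<Longrightarrow> u' \<notin> e \<and> v' \<notin> e"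
  using sub u'V v'V by blast

lemma tb:
  assumes X: "u' \<notin> X" "v' \<notin> X"
  shows "Qg V2 E2 (X \<union> {u', v'}) = Qg V E X"
proof -
  have "V2 - (X \<union> {u', v'}) = V - X" unfolding V2_def using u'V v'V by auto
  moreover have "{f\<in>E2. f \<inter> (X \<union> {u', v'}) = {}} = {f\<in>E. f \<inter> X = {}}"
  proof (intro set_eqI iffI)
    fix f assume "f \<in> {f\<in>E2. f \<inter> (X \<union> {u', v'}) = {}}"
    then have f: "f \<in> E2" "f \<inter> (X \<union> {u', v'}) = {}" by auto
    then have "f \<in> E" unfolding E2_def by auto
    then show "f \<in> {f\<in>E. f \<inter> X = {}}" using f by auto
  next
    fix f assume "f \<in> {f\<in>E. f \<inter> X = {}}"
    then have f: "f \<in> E" "f \<inter> X = {}" by auto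
    then have "u' \<notin> f" "v' \<notin> f" using notin_old by auto
    then show "f \<in> {f\<in>E2. f \<inter> (X \<union> {u', v'}) = {}}" using f unfolding E2_def by auto
  qed
  ultimately show ?thesis unfolding Qg_def by simp
qed

lemma tc:
  assumes X: "u' \<notin> X" "v' \<notin> X" "u \<notin> X"
  shows "Qg V2 E2 (X \<union> {v'}) = Qg V E (X \<union> {u})"
proof -
  let ?V = "V2 - (X \<union> {v'})" and ?E = "{f\<in>E2. f \<inter> (X \<union> {v'}) = {}}"
  have w: "wfg ?V ?E" by (rule wfg_restrict[OF wf2])
  have x: "{u, u'} \<in> ?E" unfolding E2_def using X neqs u'v' by auto
  have u'in: "u' \<in> ?V" unfolding V2_def using X u'v' by auto
  have only: "\<forall>e\<in>?E. u' \<in> e \<longrightarrow> e = {u, u'}"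
  proof (intro ballI impI)
    fix e assume e: "e \<in> ?E" "u' \<in> e"
    then have "e \<in> E2" "v' \<notin> e" by auto
    then show "e = {u, u'}" unfolding E2_def using e(2) notin_old neqs by auto
  qed
  have "card (perfect_matchings ?V ?E) = card (perfect_matchings (?V - {u, u'}) {f\<in>?E. f \<inter> {u, u'} = {}})"
    by (rule pm_pendant[OF w x _ u'in only]) simp
  moreover have "?V - {u, u'} = V - (X \<union> {u})" unfolding V2_def using u'V v'V by auto
  moreover have "{f\<in>?E. f \<inter> {u, u'} = {}} = {f\<in>E. f \<inter> (X \<union> {u}) = {}}"
  proof (intro set_eqI iffI)
    fix f assume "f \<in> {f\<in>?E. f \<inter> {u, u'} = {}}"
    then have f: "f \<in> E2" "f \<inter> (X \<union> {v'}) = {}" "f \<inter> {u, u'} = {}" by auto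
    then have "f \<in> E" unfolding E2_def by auto
    then show "f \<in> {f\<in>E. f \<inter> (X \<union> {u}) = {}}" using f by auto
  next
    fix f assume "f \<in> {f\<in>E. f \<inter> (X \<union> {u}) = {}}"
    then have f: "f \<in> E" "f \<inter> (X \<union> {u}) = {}" by auto
    then have "u' \<notin> f" "v' \<notin> f" using notin_old by auto
    then show "f \<in> {f\<in>?E. f \<inter> {u, u'} = {}}" using f unfolding E2_def by auto
  qed
  ultimately show ?thesis unfolding Qg_def by simp
qed

lemma ta:
  assumes X: "u' \<notin> X" "v' \<notin> X" "u \<notin> X" "v \<notin> X"
  shows "Qg V2 E2 X = Qg V E X + Qg V E (X \<union> {u, v})"
proof -
  let ?V = "V2 - X" and ?E = "{f\<in>E2. f \<inter> X = {}}"
  have w: "wfg ?V ?E" by (rule wfg_restrict[OF wf2])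
  have x: "{u', v'} \<in> ?E" unfolding E2_def using X by simp
  have s: "card (perfect_matchings ?V ?E) = card (perfect_matchings ?V (?E - {{u', v'}}))
           + card (perfect_matchings (?V - {u', v'}) {f\<in>?E. f \<inter> {u', v'} = {}})"
    by (rule pm_split[OF w x])
  have t2: "card (perfect_matchings (?V - {u', v'}) {f\<in>?E. f \<inter> {u', v'} = {}}) = Qg V E X"
  proof -
    have "?V - {u', v'} = V2 - (X \<union> {u', v'})" by blast
    moreover have "{f\<in>?E. f \<inter> {u', v'} = {}} = {f\<in>E2. f \<inter> (X \<union> {u', v'}) = {}}" by (rule restrict_restrict)
    ultimately show ?thesis using tb[OF X(1,2)] unfolding Qg_def by simp
  qed
  let ?E1 = "?E - {{u', v'}}"
  have w1: "wfg ?V ?E1" using wfg_mono[OF w Diff_subset] .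
  have x1: "{u, u'} \<in> ?E1"
  proof -
    have "{u, u'} \<noteq> {u', v'}" using neqs u'v' by (simp add: doubleton_eq_iff)
    then show ?thesis unfolding E2_def using X neqs by auto
  qed
  have u'in: "u' \<in> ?V" unfolding V2_def using X by auto
  have only1: "\<forall>e\<in>?E1. u' \<in> e \<longrightarrow> e = {u, u'}"
  proof (intro ballI impI)
    fix e assume e: "e \<in> ?E1" "u' \<in> e"
    then have "e \<in> E2" "e \<noteq> {u', v'}" by auto
    then consider "e \<in> E" | "e = {u, u'}" | "e = {v, v'}" unfolding E2_def by blast
    then show "e = {u, u'}"
    proof cases
      case 1 then show ?thesis using e(2) notin_old by blast
    next
      case 3 then show ?thesis using e(2) neqs u'v' by blast
    qed
  qed
  have p1: "card (perfect_matchings ?V ?E1) = card (perfect_matchings (?V - {u, u'}) {f\<in>?E1. f \<inter> {u, u'} = {}})"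
    by (rule pm_pendant[OF w1 x1 _ u'in only1]) simp
  let ?V3 = "?V - {u, u'}" and ?E3 = "{f\<in>?E1. f \<inter> {u, u'} = {}}"
  have w3: "wfg ?V3 ?E3" by (rule wfg_restrict[OF w1])
  have x3: "{v, v'} \<in> ?E3"
  proof -
    have "{v, v'} \<noteq> {u', v'}" using neqs u'v' uv by (simp add: doubleton_eq_iff)
    then show ?thesis unfolding E2_def using X neqs uv u'v' by auto
  qed
  have v'in: "v' \<in> ?V3" unfolding V2_def using X neqs u'v' by auto
  have only3: "\<forall>e\<in>?E3. v' \<in> e \<longrightarrow> e = {v, v'}"
  proof (intro ballI impI)
    fix e assume e: "e \<in> ?E3" "v' \<in> e"
    then have "e \<in> E2" "e \<noteq> {u', v'}" "u' \<notin> e" by auto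
    then consider "e \<in> E" | "e = {u, u'}" | "e = {v, v'}" unfolding E2_def by blast
    then show "e = {v, v'}"
    proof cases
      case 1 then show ?thesis using e(2) notin_old by blast
    next
      case 2 then show ?thesis using \<open>u' \<notin> e\<close> by blast
    qed
  qed
  have p3: "card (perfect_matchings ?V3 ?E3) = card (perfect_matchings (?V3 - {v, v'}) {f\<in>?E3. f \<inter> {v, v'} = {}})"
    by (rule pm_pendant[OF w3 x3 _ v'in only3]) simp
  have "?V3 - {v, v'} = V - (X \<union> {u, v})" unfolding V2_def using u'V v'V by auto
  moreover have "{f\<in>?E3. f \<inter> {v, v'} = {}} = {f\<in>E. f \<inter> (X \<union> {u, v}) = {}}"
  proof (intro set_eqI iffI)
    fix f assume "f \<in> {f\<in>?E3. f \<inter> {v, v'} = {}}"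
    then have f: "f \<in> E2" "f \<inter> X = {}" "f \<inter> {u, u'} = {}" "f \<inter> {v, v'} = {}" by auto
    then have "f \<in> E" unfolding E2_def by auto
    then show "f \<in> {f\<in>E. f \<inter> (X \<union> {u, v}) = {}}" using f by auto
  next
    fix f assume "f \<in> {f\<in>E. f \<inter> (X \<union> {u, v}) = {}}"
    then have f: "f \<in> E" "f \<inter> (X \<union> {u, v}) = {}" by auto
    then have "u' \<notin> f" "v' \<notin> f" using notin_old by auto
    moreover have "f \<noteq> {u', v'}" using calculation by auto
    ultimately show "f \<in> {f\<in>?E3. f \<inter> {v, v'} = {}}" using f unfolding E2_def by auto
  qed
  ultimately have t1: "card (perfect_matchings ?V3 ?E3) = Qg V E (X \<union> {u, v})"
    using p3 unfolding Qg_def by simp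
  show ?thesis using s t2 p1 t1 unfolding Qg_def by simp
qed

end


lemma step_sum: "fst (step d p) + snd (step d p) = fst p + snd p + 1"
  by (cases d; cases p) auto

lemma tile_pos_sum: "fst (tile_pos ds i) + snd (tile_pos ds i) = int i"
  by (induction i) (auto simp: step_sum)

lemma tile_pos_nonneg: "0 \<le> fst (tile_pos ds i) \<and> 0 \<le> snd (tile_pos ds i)"
proof (induction i)
  case 0 then show ?case by simp
next
  case (Suc i) then show ?case by (cases "ds ! i"; cases "tile_pos ds i") auto
qed

lemma tile_pos_app: "i \<le> length ds \<Longrightarrow> tile_pos (ds @ xs) i = tile_pos ds i"
  by (induction i) (auto simp: nth_append)

lemma tile_pos_snoc: "tile_pos (ds @ [d]) (Suc (length ds)) = step d (tile_pos ds (length ds))"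
  by (simp add: tile_pos_app)

fun uu :: "dir \<Rightarrow> point \<Rightarrow> point" where
  "uu East (x, y) = (x + 1, y)"
| "uu North (x, y) = (x, y + 1)"
definition vv :: "point \<Rightarrow> point" where "vv p = (fst p + 1, snd p + 1)"
fun uu' :: "dir \<Rightarrow> point \<Rightarrow> point" where
  "uu' East (x, y) = (x + 2, y)"
| "uu' North (x, y) = (x, y + 2)"
fun vv' :: "dir \<Rightarrow> point \<Rightarrow> point" where
  "vv' East (x, y) = (x + 2, y + 1)"
| "vv' North (x, y) = (x + 1, y + 2)"

lemma corners_step: "tile_corners (step d p) = {uu d p, vv p, uu' d p, vv' d p}"
  by (cases d; cases p) (simp_all add: tile_corners_def vv_def ac_simps insert_commute)

lemma edges_step: "tile_edges (step d p) = {{uu d p, vv p}, {uu d p, uu' d p}, {vv p, vv' d p}, {uu' d p, vv' d p}}"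
  by (cases d; cases p) (simp_all add: tile_edges_def south_edge_def north_edge_def east_edge_def west_edge_def vv_def ac_simps insert_commute)

lemma exit_edge: "{uu d p, vv p} \<in> tile_edges p"
  by (cases d; cases p) (simp_all add: tile_edges_def south_edge_def north_edge_def east_edge_def west_edge_def vv_def ac_simps insert_commute)

lemma uu_corner: "uu d p \<in> tile_corners p" and vv_corner: "vv p \<in> tile_corners p"
  by (cases d; cases p; simp add: tile_corners_def vv_def)+

lemma sv_snoc: "snake_vertices (ds @ [d]) = snake_vertices ds \<union> tile_corners (step d (tile_pos ds (length ds)))"
proof -
  have "snake_vertices (ds @ [d]) = (\<Union>i<Suc (Suc (length ds)). tile_corners (tile_pos (ds @ [d]) i))"
    by (simp add: snake_vertices_def ntiles_def)
  also have "\<dots> = (\<Union>i<Suc (length ds). tile_corners (tile_pos (ds @ [d]) i)) \<union> tile_corners (tile_pos (ds @ [d]) (Suc (length ds)))"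
    by (simp add: lessThan_Suc Un_commute)
  also have "(\<Union>i<Suc (length ds). tile_corners (tile_pos (ds @ [d]) i)) = snake_vertices ds"
    unfolding snake_vertices_def ntiles_def by (intro SUP_cong) (auto simp: tile_pos_app)
  finally show ?thesis by (simp add: tile_pos_app)
qed

lemma se_snoc: "snake_edges (ds @ [d]) = snake_edges ds \<union> tile_edges (step d (tile_pos ds (length ds)))"
proof -
  have "snake_edges (ds @ [d]) = (\<Union>i<Suc (Suc (length ds)). tile_edges (tile_pos (ds @ [d]) i))"
    by (simp add: snake_edges_def ntiles_def)
  also have "\<dots> = (\<Union>i<Suc (length ds). tile_edges (tile_pos (ds @ [d]) i)) \<union> tile_edges (tile_pos (ds @ [d]) (Suc (length ds)))"
    by (simp add: lessThan_Suc Un_commute)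
  also have "(\<Union>i<Suc (length ds). tile_edges (tile_pos (ds @ [d]) i)) = snake_edges ds"
    unfolding snake_edges_def ntiles_def by (intro SUP_cong) (auto simp: tile_pos_app)
  finally show ?thesis by (simp add: tile_pos_app)
qed

lemma corner_bound:
  assumes "w \<in> tile_corners p"
  shows "fst p \<le> fst w \<and> snd p \<le> snd w \<and> fst w + snd w \<le> fst p + snd p + 2
     \<and> (fst w + snd w = fst p + snd p + 2 \<longrightarrow> w = vv p)"
  using assms by (cases p) (auto simp: tile_corners_def vv_def)

lemma sv_bound:
  assumes "w \<in> snake_vertices ds"
  shows "0 \<le> fst w \<and> 0 \<le> snd w \<and> fst w + snd w \<le> int (length ds) + 2
     \<and> (fst w + snd w = int (length ds) + 2 \<longrightarrow> w = vv (tile_pos ds (length ds)))"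
proof -
  obtain i where i: "i < Suc (length ds)" "w \<in> tile_corners (tile_pos ds i)"
    using assms unfolding snake_vertices_def ntiles_def by auto
  note cb = corner_bound[OF i(2)]
  have s: "fst (tile_pos ds i) + snd (tile_pos ds i) = int i" by (rule tile_pos_sum)
  have nn: "0 \<le> fst (tile_pos ds i) \<and> 0 \<le> snd (tile_pos ds i)" by (rule tile_pos_nonneg)
  show ?thesis
  proof (cases "i = length ds")
    case True
    then show ?thesis using cb s nn by auto
  next
    case False
    then have "i < length ds" using i by simp
    then show ?thesis using cb s nn by auto
  qed
qed

lemma tile_edge_form:
  assumes "e \<in> tile_edges p"
  shows "\<exists>a b. e = {a, b} \<and> a \<in> tile_corners p \<and> b \<in> tile_corners p \<and> (b = (fst a + 1, snd a) \<or> b = (fst a, snd a + 1))"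
  using assms by (cases p) (auto simp: tile_edges_def tile_corners_def south_edge_def north_edge_def east_edge_def west_edge_def)

lemma se_form:
  assumes "e \<in> snake_edges ds"
  shows "\<exists>a b. e = {a, b} \<and> a \<in> snake_vertices ds \<and> b \<in> snake_vertices ds \<and> (b = (fst a + 1, snd a) \<or> b = (fst a, snd a + 1))"
proof -
  obtain i where i: "i < ntiles ds" "e \<in> tile_edges (tile_pos ds i)"
    using assms unfolding snake_edges_def by auto
  obtain a b where ab: "e = {a, b}" "a \<in> tile_corners (tile_pos ds i)" "b \<in> tile_corners (tile_pos ds i)"
     "b = (fst a + 1, snd a) \<or> b = (fst a, snd a + 1)"
    using tile_edge_form[OF i(2)] by blast
  have "a \<in> snake_vertices ds" "b \<in> snake_vertices ds" using ab(2,3) i(1) unfolding snake_vertices_def by auto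
  then show ?thesis using ab by blast
qed

lemma se_sub: "e \<in> snake_edges ds \<Longrightarrow> e \<subseteq> snake_vertices ds"
  using se_form by blast

lemma sv_finite: "finite (snake_vertices ds)"
  unfolding snake_vertices_def tile_corners_def by auto

lemma snake_wfg: "wfg (snake_vertices ds) (snake_edges ds)"
  unfolding wfg_def
proof (intro conjI ballI sv_finite)
  fix e assume "e \<in> snake_edges ds"
  from se_form[OF this] obtain a b where "e = {a, b}" "a \<in> snake_vertices ds" "b \<in> snake_vertices ds"
    "b = (fst a + 1, snd a) \<or> b = (fst a, snd a + 1)" by blast
  moreover then have "a \<noteq> b" by (cases a) auto
  ultimately show "\<exists>a b. a \<noteq> b \<and> e = {a, b} \<and> a \<in> snake_vertices ds \<and> b \<in> snake_vertices ds" by blast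
qed


lemma new_notin:
  fixes ds :: "dir list" and d :: dir
  defines "p \<equiv> tile_pos ds (length ds)"
  shows "uu' d p \<notin> snake_vertices ds" "vv' d p \<notin> snake_vertices ds"
proof -
  have s: "fst p + snd p = int (length ds)" unfolding p_def by (rule tile_pos_sum)
  show "uu' d p \<notin> snake_vertices ds"
  proof
    assume "uu' d p \<in> snake_vertices ds"
    note b = sv_bound[OF this, folded p_def]
    have "fst (uu' d p) + snd (uu' d p) = int (length ds) + 2" using s by (cases d; cases p) auto
    then have "uu' d p = vv p" using b by simp
    then show False by (cases d; cases p) (auto simp: vv_def)
  qed
  show "vv' d p \<notin> snake_vertices ds"
  proof
    assume "vv' d p \<in> snake_vertices ds"
    note b = sv_bound[OF this, folded p_def]
    have "fst (vv' d p) + snd (vv' d p) = int (length ds) + 3" using s by (cases d; cases p) auto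
    then show False using b by simp
  qed
qed

lemma last_corner_in: "tile_corners (tile_pos ds (length ds)) \<subseteq> snake_vertices ds"
  unfolding snake_vertices_def ntiles_def by auto

lemma last_edges_in: "tile_edges (tile_pos ds (length ds)) \<subseteq> snake_edges ds"
  unfolding snake_edges_def ntiles_def by auto

lemma snake_tadd:
  fixes ds :: "dir list" and d :: dir
  defines "p \<equiv> tile_pos ds (length ds)"
  shows "tadd (snake_vertices ds) (snake_edges ds) (uu d p) (vv p) (uu' d p) (vv' d p)"
proof
  show "wfg (snake_vertices ds) (snake_edges ds)" by (rule snake_wfg)
  show "uu d p \<in> snake_vertices ds" using uu_corner last_corner_in unfolding p_def by blast
  show "vv p \<in> snake_vertices ds" using vv_corner last_corner_in unfolding p_def by blast
  show "uu d p \<noteq> vv p" by (cases d; cases p) (auto simp: vv_def)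
  show "uu' d p \<notin> snake_vertices ds" "vv' d p \<notin> snake_vertices ds" unfolding p_def by (rule new_notin)+
  show "uu' d p \<noteq> vv' d p" by (cases d; cases p) auto
  show "\<And>e. e \<in> snake_edges ds \<Longrightarrow> e \<subseteq> snake_vertices ds" by (rule se_sub)
qed

lemma sv_snoc2:
  fixes ds :: "dir list" and d :: dir
  defines "p \<equiv> tile_pos ds (length ds)"
  shows "snake_vertices (ds @ [d]) = snake_vertices ds \<union> {uu' d p, vv' d p}"
proof -
  have "uu d p \<in> snake_vertices ds" "vv p \<in> snake_vertices ds"
    using uu_corner vv_corner last_corner_in unfolding p_def by blast+
  then show ?thesis unfolding sv_snoc corners_step p_def by auto
qed

lemma se_snoc2:
  fixes ds :: "dir list" and d :: dir
  defines "p \<equiv> tile_pos ds (length ds)"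
  shows "snake_edges (ds @ [d]) = snake_edges ds \<union> {{uu d p, uu' d p}, {vv p, vv' d p}, {uu' d p, vv' d p}}"
proof -
  have "{uu d p, vv p} \<in> snake_edges ds"
    using exit_edge last_edges_in unfolding p_def by blast
  then show ?thesis unfolding se_snoc edges_step p_def by auto
qed

definition QQ :: "dir list \<Rightarrow> point set \<Rightarrow> nat" where
  "QQ ds X = Qg (snake_vertices ds) (snake_edges ds) X"

lemma QQ_a:
  fixes ds :: "dir list" and d :: dir
  defines "p \<equiv> tile_pos ds (length ds)"
  assumes "uu' d p \<notin> X" "vv' d p \<notin> X" "uu d p \<notin> X" "vv p \<notin> X"
  shows "QQ (ds @ [d]) X = QQ ds X + QQ ds (X \<union> {uu d p, vv p})"
  using tadd.ta[OF snake_tadd[of ds d, folded p_def] assms(2-5)]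
  unfolding QQ_def sv_snoc2[of ds d, folded p_def] se_snoc2[of ds d, folded p_def]
  by (simp add: tadd.V2_def[OF snake_tadd[of ds d, folded p_def]] tadd.E2_def[OF snake_tadd[of ds d, folded p_def]])

lemma QQ_b:
  fixes ds :: "dir list" and d :: dir
  defines "p \<equiv> tile_pos ds (length ds)"
  assumes "uu' d p \<notin> X" "vv' d p \<notin> X"
  shows "QQ (ds @ [d]) (X \<union> {uu' d p, vv' d p}) = QQ ds X"
  using tadd.tb[OF snake_tadd[of ds d, folded p_def] assms(2-3)]
  unfolding QQ_def sv_snoc2[of ds d, folded p_def] se_snoc2[of ds d, folded p_def]
  by (simp add: tadd.V2_def[OF snake_tadd[of ds d, folded p_def]] tadd.E2_def[OF snake_tadd[of ds d, folded p_def]])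

lemma QQ_c:
  fixes ds :: "dir list" and d :: dir
  defines "p \<equiv> tile_pos ds (length ds)"
  assumes "uu' d p \<notin> X" "vv' d p \<notin> X" "uu d p \<notin> X"
  shows "QQ (ds @ [d]) (X \<union> {vv' d p}) = QQ ds (X \<union> {uu d p})"
  using tadd.tc[OF snake_tadd[of ds d, folded p_def] assms(2-4)]
  unfolding QQ_def sv_snoc2[of ds d, folded p_def] se_snoc2[of ds d, folded p_def]
  by (simp add: tadd.V2_def[OF snake_tadd[of ds d, folded p_def]] tadd.E2_def[OF snake_tadd[of ds d, folded p_def]])


lemma QQ_empty: "QQ ds {} = card (perfect_matchings (snake_vertices ds) (snake_edges ds))"
  unfolding QQ_def Qg_def by simp

lemma edges_at_last:
  fixes ds :: "dir list"
  defines "p \<equiv> tile_pos ds (length ds)"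
  assumes e: "e \<in> snake_edges ds" "vv p \<in> e"
  shows "e = north_edge p \<or> e = east_edge p"
proof -
  obtain a b where ab: "e = {a, b}" "a \<in> snake_vertices ds" "b \<in> snake_vertices ds"
    "b = (fst a + 1, snd a) \<or> b = (fst a, snd a + 1)" using se_form[OF e(1)] by blast
  have s: "fst p + snd p = int (length ds)" unfolding p_def by (rule tile_pos_sum)
  have sv: "fst (vv p) + snd (vv p) = int (length ds) + 2" using s by (simp add: vv_def)
  note ba = sv_bound[OF ab(3), folded p_def]
  have "vv p \<noteq> a"
  proof
    assume "vv p = a"
    then have "fst b + snd b = int (length ds) + 3" using ab(4) sv by auto
    then show False using ba by simp
  qed
  then have "vv p = b" using e(2) ab(1) by blast
  then show ?thesis using ab(1,4) by (cases p) (auto simp: vv_def north_edge_def east_edge_def insert_commute)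
qed

lemma QQ_last:
  fixes ds :: "dir list"
  defines "p \<equiv> tile_pos ds (length ds)"
  shows "QQ ds {} = QQ ds (north_edge p) + QQ ds (east_edge p)"
proof -
  let ?V = "snake_vertices ds" and ?E = "snake_edges ds"
  have nE: "north_edge p \<in> ?E" "east_edge p \<in> ?E"
    using last_edges_in unfolding p_def tile_edges_def by auto
  have s: "card (perfect_matchings ?V ?E) = card (perfect_matchings ?V (?E - {north_edge p}))
      + card (perfect_matchings (?V - north_edge p) {f\<in>?E. f \<inter> north_edge p = {}})"
    by (rule pm_split[OF snake_wfg nE(1)])
  have ne: "east_edge p \<noteq> north_edge p" by (cases p) (auto simp: east_edge_def north_edge_def doubleton_eq_iff)
  have vin: "vv p \<in> ?V" using vv_corner last_corner_in unfolding p_def by blast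
  have vve: "vv p \<in> east_edge p" "vv p \<in> north_edge p" by (auto simp: vv_def east_edge_def north_edge_def)
  have only: "\<forall>e\<in>?E - {north_edge p}. vv p \<in> e \<longrightarrow> e = east_edge p"
    using edges_at_last[of _ ds, folded p_def] by blast
  have "card (perfect_matchings ?V (?E - {north_edge p}))
      = card (perfect_matchings (?V - east_edge p) {f\<in>?E - {north_edge p}. f \<inter> east_edge p = {}})"
    by (rule pm_pendant[OF wfg_mono[OF snake_wfg Diff_subset] _ vve(1) vin only]) (use nE ne in blast)
  moreover have "{f\<in>?E - {north_edge p}. f \<inter> east_edge p = {}} = {f\<in>?E. f \<inter> east_edge p = {}}"
    using vve by blast
  ultimately show ?thesis using s unfolding QQ_def Qg_def by simp
qed

definition col :: "point \<Rightarrow> bool" where "col w = even (fst w + snd w)"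

lemma balanced: "card {w\<in>snake_vertices ds. col w} = card {w\<in>snake_vertices ds. \<not> col w}"
proof (induction ds rule: rev_induct)
  case Nil
  have V: "snake_vertices [] = {(0,0), (1,0), (0,1), (1,1)}"
    by (simp add: snake_vertices_def ntiles_def tile_corners_def lessThan_Suc)
  have "{w\<in>snake_vertices []. col w} = {(0,0), (1,1)}" unfolding V col_def by auto
  moreover have "{w\<in>snake_vertices []. \<not> col w} = {(1,0), (0,1)}" unfolding V col_def by auto
  ultimately show ?case by simp
next
  case (snoc d ds)
  define p where "p = tile_pos ds (length ds)"
  have V: "snake_vertices (ds @ [d]) = snake_vertices ds \<union> {uu' d p, vv' d p}"
    unfolding p_def by (rule sv_snoc2)
  have nin: "uu' d p \<notin> snake_vertices ds" "vv' d p \<notin> snake_vertices ds" unfolding p_def by (rule new_notin)+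
  have cc: "col (uu' d p) \<noteq> col (vv' d p)" "uu' d p \<noteq> vv' d p" by (cases d; cases p; simp add: col_def)+
  have fin: "finite (snake_vertices ds)" by (rule sv_finite)
  have gen: "card {w\<in>snake_vertices ds \<union> {uu' d p, vv' d p}. P w} = Suc (card {w\<in>snake_vertices ds. P w})"
    if "P (uu' d p) \<noteq> P (vv' d p)" for P
  proof (cases "P (uu' d p)")
    case True
    then have "{w\<in>snake_vertices ds \<union> {uu' d p, vv' d p}. P w} = insert (uu' d p) {w\<in>snake_vertices ds. P w}"
      using that by auto
    then show ?thesis using nin fin by simp
  next
    case False
    then have "{w\<in>snake_vertices ds \<union> {uu' d p, vv' d p}. P w} = insert (vv' d p) {w\<in>snake_vertices ds. P w}"
      using that by auto
    then show ?thesis using nin fin by simp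
  qed
  show ?case unfolding V using gen[of col] gen[of "\<lambda>w. \<not> col w"] cc snoc.IH by simp
qed

lemma QQ_zero:
  assumes ab: "a \<in> snake_vertices ds" "b \<in> snake_vertices ds" "a \<noteq> b" "col a = col b"
  shows "QQ ds {a, b} = 0"
proof -
  let ?V = "snake_vertices ds - {a, b}" and ?E = "{f\<in>snake_edges ds. f \<inter> {a, b} = {}}"
  have "perfect_matchings ?V ?E = {}"
  proof (rule ccontr)
    assume ne: "perfect_matchings ?V ?E \<noteq> {}"
    have w: "wfg ?V ?E" by (rule wfg_restrict[OF snake_wfg])
    have c: "col x \<noteq> col y" if "f \<in> ?E" "x \<in> f" "y \<in> f" "x \<noteq> y" for f x y
    proof -
      have "f \<in> snake_edges ds" using that by simp
      from se_form[OF this] obtain a' b' where f: "f = {a', b'}" "b' = (fst a' + 1, snd a') \<or> b' = (fst a', snd a' + 1)"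
        by blast
      have cab: "col a' \<noteq> col b'" using f(2) by (auto simp: col_def)
      have "x \<in> {a', b'}" "y \<in> {a', b'}" using that f by auto
      then have "(x = a' \<and> y = b') \<or> (x = b' \<and> y = a')" using that(4) by blast
      then show ?thesis using cab by auto
    qed
    have eq: "card {w\<in>?V. col w} = card {w\<in>?V. \<not> col w}" by (rule pm_parity[OF w c ne])
    have fin: "finite (snake_vertices ds)" by (rule sv_finite)
    have bal: "card {w\<in>snake_vertices ds. col w} = card {w\<in>snake_vertices ds. \<not> col w}" by (rule balanced)
    show False
    proof (cases "col a")
      case True
      have A: "{w\<in>?V. col w} = {w\<in>snake_vertices ds. col w} - {a, b}" by auto
      have B: "{w\<in>?V. \<not> col w} = {w\<in>snake_vertices ds. \<not> col w}" using True ab(4) by auto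
      have "{a, b} \<subseteq> {w\<in>snake_vertices ds. col w}" using True ab by auto
      then have "card ({w\<in>snake_vertices ds. col w} - {a, b}) = card {w\<in>snake_vertices ds. col w} - 2"
        using fin ab(3) by (simp add: card_Diff_subset)
      moreover have "card {w\<in>snake_vertices ds. col w} \<ge> 2"
      proof -
        have "card {a, b} = 2" using ab(3) by simp
        moreover have "finite {w\<in>snake_vertices ds. col w}" using fin by simp
        ultimately show ?thesis using card_mono \<open>{a, b} \<subseteq> _\<close> by metis
      qed
      ultimately show False using eq A B bal by simp
    next
      case False
      have A: "{w\<in>?V. \<not> col w} = {w\<in>snake_vertices ds. \<not> col w} - {a, b}" by auto
      have B: "{w\<in>?V. col w} = {w\<in>snake_vertices ds. col w}" using False ab(4) by auto
      have "{a, b} \<subseteq> {w\<in>snake_vertices ds. \<not> col w}" using False ab by auto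
      then have "card ({w\<in>snake_vertices ds. \<not> col w} - {a, b}) = card {w\<in>snake_vertices ds. \<not> col w} - 2"
        using fin ab(3) by (simp add: card_Diff_subset)
      moreover have "card {w\<in>snake_vertices ds. \<not> col w} \<ge> 2"
      proof -
        have "card {a, b} = 2" using ab(3) by simp
        moreover have "finite {w\<in>snake_vertices ds. \<not> col w}" using fin by simp
        ultimately show ?thesis using card_mono \<open>{a, b} \<subseteq> _\<close> by metis
      qed
      ultimately show False using eq A B bal by simp
    qed
  qed
  then show ?thesis unfolding QQ_def Qg_def by simp
qed


lemma tile_pos_count:
  "i \<le> length ds \<Longrightarrow> tile_pos ds i = (int (length (filter ((=) East) (take i ds))), int (length (filter ((=) North) (take i ds))))"
proof (induction i)
  case 0 then show ?case by simp
next
  case (Suc i)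
  then have il: "i < length ds" by simp
  have t: "take (Suc i) ds = take i ds @ [ds ! i]" using il by (simp add: take_Suc_conv_app_nth)
  show ?case using Suc il unfolding t by (cases "ds ! i") auto
qed

lemma count_split: "length (filter P ds) = length (filter P (take i ds)) + length (filter P (drop i ds))"
proof -
  have "filter P ds = filter P (take i ds) @ filter P (drop i ds)"
    by (metis append_take_drop_id filter_append)
  then show ?thesis by simp
qed

lemma tile_pos_pal:
  assumes pal: "rev ds = ds" and i: "i \<le> length ds"
  defines "c \<equiv> tile_pos ds (length ds)"
  shows "tile_pos ds (length ds - i) = (fst c - fst (tile_pos ds i), snd c - snd (tile_pos ds i))"
proof -
  have tk: "take (length ds - i) ds = rev (drop i ds)"
    by (metis pal rev_drop)
  have "c = (int (length (filter ((=) East) ds)), int (length (filter ((=) North) ds)))"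
    unfolding c_def by (simp add: tile_pos_count)
  then show ?thesis
    using tile_pos_count[OF i] tile_pos_count[of "length ds - i" ds] i
      count_split[of "(=) East" ds i] count_split[of "(=) North" ds i]
    unfolding tk by (simp add: rev_filter[symmetric])
qed

definition hh :: "point \<Rightarrow> point \<Rightarrow> point" where
  "hh c w = (fst c + 1 - fst w, snd c + 1 - snd w)"

lemma hh_inv: "hh c (hh c w) = w" by (simp add: hh_def)

lemma hh_inj: "inj (hh c)" by (metis hh_inv injI)

lemma hh_corners: "hh c ` tile_corners q = tile_corners (fst c - fst q, snd c - snd q)"
  by (simp add: hh_def tile_corners_def insert_commute algebra_simps)

lemma hh_edges: "(`) (hh c) ` tile_edges q = tile_edges (fst c - fst q, snd c - snd q)"
  by (simp add: hh_def tile_edges_def south_edge_def north_edge_def west_edge_def east_edge_def insert_commute algebra_simps)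

lemma UN_rev: "(\<Union>i<Suc L. F (L - i)) = (\<Union>i<Suc L. (F i :: 'a set))"
proof (intro set_eqI iffI)
  fix x assume "x \<in> (\<Union>i<Suc L. F (L - i))"
  then obtain i where "i < Suc L" "x \<in> F (L - i)" by blast
  moreover have "L - i < Suc L" by simp
  ultimately show "x \<in> (\<Union>i<Suc L. F i)" by blast
next
  fix x assume "x \<in> (\<Union>i<Suc L. F i)"
  then obtain j where j: "j < Suc L" "x \<in> F j" by blast
  then have "F (L - (L - j)) = F j" by simp
  moreover have "L - j < Suc L" by simp
  ultimately show "x \<in> (\<Union>i<Suc L. F (L - i))" using j by (metis UN_I lessThan_iff)
qed

lemma hh_V:
  assumes pal: "rev ds = ds"
  defines "c \<equiv> tile_pos ds (length ds)"
  shows "hh c ` snake_vertices ds = snake_vertices ds"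
proof -
  have "hh c ` snake_vertices ds = (\<Union>i<Suc (length ds). hh c ` tile_corners (tile_pos ds i))"
    unfolding snake_vertices_def ntiles_def by (simp add: image_UN)
  also have "\<dots> = (\<Union>i<Suc (length ds). tile_corners (tile_pos ds (length ds - i)))"
    by (intro SUP_cong refl) (simp add: hh_corners tile_pos_pal[OF pal] c_def)
  also have "\<dots> = snake_vertices ds"
    unfolding snake_vertices_def ntiles_def using UN_rev[of "\<lambda>i. tile_corners (tile_pos ds i)"] by simp
  finally show ?thesis .
qed

lemma hh_E:
  assumes pal: "rev ds = ds"
  defines "c \<equiv> tile_pos ds (length ds)"
  shows "(`) (hh c) ` snake_edges ds = snake_edges ds"
proof -
  have "(`) (hh c) ` snake_edges ds = (\<Union>i<Suc (length ds). (`) (hh c) ` tile_edges (tile_pos ds i))"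
    unfolding snake_edges_def ntiles_def by (simp add: image_UN)
  also have "\<dots> = (\<Union>i<Suc (length ds). tile_edges (tile_pos ds (length ds - i)))"
    by (intro SUP_cong refl) (simp add: hh_edges tile_pos_pal[OF pal] c_def)
  also have "\<dots> = snake_edges ds"
    unfolding snake_edges_def ntiles_def using UN_rev[of "\<lambda>i. tile_edges (tile_pos ds i)"] by simp
  finally show ?thesis .
qed

lemma QQ_sym:
  assumes pal: "rev ds = ds"
  defines "c \<equiv> tile_pos ds (length ds)"
  shows "QQ ds (hh c ` X) = QQ ds X"
proof -
  let ?h = "hh c" and ?V = "snake_vertices ds" and ?E = "snake_edges ds"
  have V: "?h ` ?V = ?V" unfolding c_def by (rule hh_V[OF pal])
  have E: "(`) ?h ` ?E = ?E" unfolding c_def by (rule hh_E[OF pal])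
  have inj: "inj ?h" by (rule hh_inj)
  have 1: "?V - ?h ` X = ?h ` (?V - X)"
    using V inj by (metis image_set_diff)
  have 2: "{f\<in>?E. f \<inter> ?h ` X = {}} = (`) ?h ` {f\<in>?E. f \<inter> X = {}}"
  proof (intro set_eqI iffI)
    fix f assume "f \<in> {f\<in>?E. f \<inter> ?h ` X = {}}"
    then have f: "f \<in> ?E" "f \<inter> ?h ` X = {}" by auto
    then obtain g where g: "g \<in> ?E" "f = ?h ` g" using E by (metis imageE)
    then have "?h ` (g \<inter> X) = {}" using f(2) inj by (simp add: image_Int)
    then have "g \<inter> X = {}" by simp
    then show "f \<in> (`) ?h ` {f\<in>?E. f \<inter> X = {}}" using g by auto
  next
    fix f assume "f \<in> (`) ?h ` {f\<in>?E. f \<inter> X = {}}"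
    then obtain g where g: "g \<in> ?E" "g \<inter> X = {}" "f = ?h ` g" by auto
    have "f \<in> ?E" using g E by auto
    moreover have "f \<inter> ?h ` X = {}" using g inj by (simp add: image_Int[symmetric])
    ultimately show "f \<in> {f\<in>?E. f \<inter> ?h ` X = {}}" by simp
  qed
  show ?thesis unfolding QQ_def Qg_def 1 2 using pm_iso[OF inj] by simp
qed


lemma first_corners: "tile_corners (0, 0) \<subseteq> snake_vertices ds"
proof -
  have "tile_corners (tile_pos ds 0) \<subseteq> snake_vertices ds" unfolding snake_vertices_def ntiles_def by auto
  then show ?thesis by simp
qed

lemma first_edges: "tile_edges (0, 0) \<subseteq> snake_edges ds"
proof -
  have "tile_edges (tile_pos ds 0) \<subseteq> snake_edges ds" unfolding snake_edges_def ntiles_def by auto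
  then show ?thesis by simp
qed

lemma edge_sum:
  assumes "e \<in> snake_edges ds" "a \<in> e" "b \<in> e" "a \<noteq> b"
  shows "fst a + snd a = fst b + snd b + 1 \<or> fst b + snd b = fst a + snd a + 1"
proof -
  obtain a' b' where f: "e = {a', b'}" "b' = (fst a' + 1, snd a') \<or> b' = (fst a', snd a' + 1)"
    using se_form[OF assms(1)] by blast
  have "(a = a' \<and> b = b') \<or> (a = b' \<and> b = a')" using assms(2-4) f(1) by blast
  then show ?thesis using f(2) by auto
qed

lemma glue_eq:
  fixes ds :: "dir list"
  defines "K \<equiv> ds @ [East, East]"
  defines "p2 \<equiv> tile_pos K (length K)"
  shows "band_glue ds = (\<lambda>v. if v = vv' North p2 then (0, 0) else if v = uu' North p2 then (1, 0) else v)"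
proof -
  have be: "band_ext ds = K @ [North]" unfolding band_ext_def K_def by simp
  have n: "ntiles ds + 2 = Suc (length K)" unfolding ntiles_def K_def by simp
  have t: "tile_pos (band_ext ds) (ntiles ds + 2) = step North p2"
    unfolding be n p2_def by (rule tile_pos_snoc)
  show ?thesis
  proof (rule ext)
    fix v
    have "band_glue ds v = (let t = step North p2 in
      if v = (fst t + 1, snd t + 1) then (0, 0) else if v = (fst t, snd t + 1) then (1, 0) else v)"
      unfolding band_glue_def t ..
    then show "band_glue ds v = (if v = vv' North p2 then (0, 0) else if v = uu' North p2 then (1, 0) else v)"
      by (cases p2) (simp add: Let_def ac_simps)
  qed
qed

lemma band_V:
  fixes ds :: "dir list"
  defines "K \<equiv> ds @ [East, East]"
  shows "band_vertices ds = snake_vertices K"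
proof -
  define p2 where "p2 = tile_pos K (length K)"
  let ?g = "band_glue ds"
  have g: "?g = (\<lambda>v. if v = vv' North p2 then (0, 0) else if v = uu' North p2 then (1, 0) else v)"
    unfolding p2_def K_def by (rule glue_eq)
  have be: "band_ext ds = K @ [North]" unfolding band_ext_def K_def by simp
  have SV: "snake_vertices (band_ext ds) = snake_vertices K \<union> {uu' North p2, vv' North p2}"
    unfolding be p2_def by (rule sv_snoc2)
  have nin: "uu' North p2 \<notin> snake_vertices K" "vv' North p2 \<notin> snake_vertices K"
    unfolding p2_def by (rule new_notin)+
  have gfix: "?g w = w" if "w \<in> snake_vertices K" for w using that nin g by auto
  have ne: "uu' North p2 \<noteq> vv' North p2" by (cases p2) auto
  have z: "(0, 0) \<in> snake_vertices K" "(1, 0) \<in> snake_vertices K"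
    using first_corners[of K] by (auto simp: tile_corners_def)
  have "?g ` (snake_vertices K \<union> {uu' North p2, vv' North p2}) = ?g ` snake_vertices K \<union> {(1, 0), (0, 0)}"
    using g ne by auto
  also have "?g ` snake_vertices K = snake_vertices K" using gfix by (simp add: image_cong)
  finally show ?thesis unfolding band_vertices_def SV using z by auto
qed

lemma band_E:
  fixes ds :: "dir list"
  defines "K \<equiv> ds @ [East, East]"
  defines "p2 \<equiv> tile_pos K (length K)"
  shows "band_edges ds = insert {uu North p2, (1, 0)} (insert {vv p2, (0, 0)} (snake_edges K))"
proof -
  let ?g = "band_glue ds"
  have g: "?g = (\<lambda>v. if v = vv' North p2 then (0, 0) else if v = uu' North p2 then (1, 0) else v)"
    unfolding p2_def K_def by (rule glue_eq)
  have be: "band_ext ds = K @ [North]" unfolding band_ext_def K_def by simp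
  have SE: "snake_edges (band_ext ds) = snake_edges K \<union> {{uu North p2, uu' North p2}, {vv p2, vv' North p2}, {uu' North p2, vv' North p2}}"
    unfolding be p2_def by (rule se_snoc2)
  have nin: "uu' North p2 \<notin> snake_vertices K" "vv' North p2 \<notin> snake_vertices K"
    unfolding p2_def by (rule new_notin)+
  have gfix: "?g w = w" if "w \<in> snake_vertices K" for w using that nin g by auto
  have fixE: "?g ` e = e" if "e \<in> snake_edges K" for e
  proof -
    have "e \<subseteq> snake_vertices K" using se_sub that by blast
    then have "?g ` e = (\<lambda>w. w) ` e" by (intro image_cong refl) (use gfix in blast)
    then show ?thesis by simp
  qed
  have ne: "uu' North p2 \<noteq> vv' North p2" by (cases p2) auto
  have uin: "uu North p2 \<in> snake_vertices K" "vv p2 \<in> snake_vertices K"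
    using uu_corner vv_corner last_corner_in unfolding p2_def by blast+
  have se0: "{(1, 0), (0, 0)} \<in> snake_edges K"
    using first_edges[of K] by (auto simp: tile_edges_def south_edge_def insert_commute)
  have "(`) ?g ` snake_edges K = (\<lambda>e. e) ` snake_edges K" by (intro image_cong refl) (rule fixE)
  then have i0: "(`) ?g ` snake_edges K = snake_edges K" by simp
  have g1: "?g (vv' North p2) = (0, 0)" unfolding g by simp
  have g2: "?g (uu' North p2) = (1, 0)" unfolding g using ne by simp
  have "?g ` {uu North p2, uu' North p2} = {?g (uu North p2), ?g (uu' North p2)}" by simp
  then have i1: "?g ` {uu North p2, uu' North p2} = {uu North p2, (1, 0)}"
    unfolding gfix[OF uin(1)] g2 .
  have "?g ` {vv p2, vv' North p2} = {?g (vv p2), ?g (vv' North p2)}" by simp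
  then have i2: "?g ` {vv p2, vv' North p2} = {vv p2, (0, 0)}"
    unfolding gfix[OF uin(2)] g1 .
  have "?g ` {uu' North p2, vv' North p2} = {?g (uu' North p2), ?g (vv' North p2)}" by simp
  then have i3: "?g ` {uu' North p2, vv' North p2} = {(1, 0), (0, 0)}"
    unfolding g1 g2 .
  have "band_edges ds = (`) ?g ` snake_edges K \<union> {?g ` {uu North p2, uu' North p2}, ?g ` {vv p2, vv' North p2}, ?g ` {uu' North p2, vv' North p2}}"
    unfolding band_edges_def SE by (simp only: image_Un image_insert image_empty)
  also have "\<dots> = snake_edges K \<union> {{uu North p2, (1, 0)}, {vv p2, (0, 0)}, {(1, 0), (0, 0)}}"
    unfolding i0 i1 i2 i3 ..
  finally show ?thesis using se0 by blast
qed


lemma band_count: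
  fixes ds :: "dir list"
  assumes pal: "rev ds = ds" and ev: "even (length ds)"
  shows "card (perfect_matchings (band_vertices ds) (band_edges ds))
       = 3 * card (perfect_matchings (snake_vertices ds) (snake_edges ds))"
proof -
  define L where "L = length ds"
  define p0 where "p0 = tile_pos ds L"
  define K1 where "K1 = ds @ [East]"
  define K where "K = K1 @ [East]"
  have KK: "ds @ [East, East] = K" unfolding K_def K1_def by simp
  have lK1: "length K1 = Suc L" unfolding K1_def L_def by simp
  have lK: "length K = Suc (Suc L)" using lK1 unfolding K_def by simp
  define p1 where "p1 = tile_pos K1 (length K1)"
  define p2 where "p2 = tile_pos K (length K)"
  have p1s: "p1 = step East p0" unfolding p1_def K1_def p0_def L_def by (simp add: tile_pos_app)
  have p2s: "p2 = step East p1" unfolding p2_def K_def p1_def by (simp add: tile_pos_app)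
  obtain x y where p0xy: "p0 = (x, y)" by (cases p0)
  have xy: "x + y = int L" "0 \<le> x" "0 \<le> y"
    using tile_pos_sum[of ds L] tile_pos_nonneg[of ds L] unfolding p0_def[symmetric] p0xy by auto
  have p1xy: "p1 = (x + 1, y)" and p2xy: "p2 = (x + 2, y)" unfolding p2s p1s p0xy by simp_all
  let ?VK = "snake_vertices K" and ?EK = "snake_edges K"
  define P where "P = uu North p2"
  define Q where "Q = vv p2"
  have PQ: "P = (x + 2, y + 1)" "Q = (x + 3, y + 1)" unfolding P_def Q_def p2xy by (simp_all add: vv_def)
  let ?x = "{P, (1, 0)}" and ?y = "{Q, (0, 0)}"
  have bV: "band_vertices ds = ?VK" unfolding band_V KK ..
  have bE: "band_edges ds = insert ?x (insert ?y ?EK)" unfolding band_E KK P_def Q_def p2_def ..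
  have Pin: "P \<in> ?VK" "Q \<in> ?VK" unfolding P_def Q_def p2_def using uu_corner vv_corner last_corner_in by blast+
  have zin: "(0, 0) \<in> ?VK" "(1, 0) \<in> ?VK" using first_corners[of K] by (auto simp: tile_corners_def)
  have neP: "P \<noteq> (1, 0)" "Q \<noteq> (0, 0)" using PQ xy by auto
  have xnot: "?x \<notin> ?EK"
  proof
    assume "?x \<in> ?EK"
    from edge_sum[OF this _ _ neP(1)] show False using PQ xy by auto
  qed
  have ynot: "?y \<notin> ?EK"
  proof
    assume "?y \<in> ?EK"
    from edge_sum[OF this _ _ neP(2)] show False using PQ xy by auto
  qed
  have xy_disj: "?x \<inter> ?y = {}" using PQ xy by auto
  have xnot2: "?x \<notin> insert ?y ?EK" using xnot xy_disj PQ xy by (auto simp: doubleton_eq_iff)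
  have wfK: "wfg ?VK ?EK" by (rule snake_wfg)
  have wfKy: "wfg ?VK (insert ?y ?EK)" using wfK Pin zin neP unfolding wfg_def by blast
  have s1: "card (perfect_matchings ?VK (insert ?x (insert ?y ?EK)))
      = card (perfect_matchings ?VK (insert ?y ?EK)) + card (perfect_matchings (?VK - ?x) {f\<in>insert ?y ?EK. f \<inter> ?x = {}})"
    by (rule pm_add_edge[OF wfKy neP(1) Pin(1) zin(2) xnot2])
  have s2: "card (perfect_matchings ?VK (insert ?y ?EK))
      = card (perfect_matchings ?VK ?EK) + card (perfect_matchings (?VK - ?y) {f\<in>?EK. f \<inter> ?y = {}})"
    by (rule pm_add_edge[OF wfK neP(2) Pin(2) zin(1) ynot])
  have fe: "{f\<in>insert ?y ?EK. f \<inter> ?x = {}} = insert ?y {f\<in>?EK. f \<inter> ?x = {}}" using xy_disj by auto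
  have wfKx: "wfg (?VK - ?x) {f\<in>?EK. f \<inter> ?x = {}}" by (rule wfg_restrict[OF wfK])
  have s3: "card (perfect_matchings (?VK - ?x) (insert ?y {f\<in>?EK. f \<inter> ?x = {}}))
      = card (perfect_matchings (?VK - ?x) {f\<in>?EK. f \<inter> ?x = {}})
        + card (perfect_matchings (?VK - ?x - ?y) {f\<in>{f\<in>?EK. f \<inter> ?x = {}}. f \<inter> ?y = {}})"
    by (rule pm_add_edge[OF wfKx neP(2)]) (use Pin zin xy_disj ynot in auto)
  have s3': "card (perfect_matchings (?VK - ?x - ?y) {f\<in>{f\<in>?EK. f \<inter> ?x = {}}. f \<inter> ?y = {}}) = QQ K (?x \<union> ?y)"
  proof -
    have "?VK - ?x - ?y = ?VK - (?x \<union> ?y)" by blast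
    then show ?thesis unfolding QQ_def Qg_def restrict_restrict by simp
  qed
  have band: "card (perfect_matchings (band_vertices ds) (band_edges ds))
      = QQ K {} + QQ K ?y + QQ K ?x + QQ K (?x \<union> ?y)"
    unfolding bV bE s1 s2 fe s3 s3' unfolding QQ_def Qg_def by simp
  have evL: "even L" using ev unfolding L_def .
  have z1: "QQ K ?x = 0"
    by (rule QQ_zero[OF Pin(1) zin(2) neP(1)]) (use PQ evL xy in \<open>simp add: col_def\<close>)
  have z2: "QQ K ?y = 0"
    by (rule QQ_zero[OF Pin(2) zin(1) neP(2)]) (use PQ evL xy in \<open>simp add: col_def\<close>)
  have Kd: "K = K1 @ [East]" unfolding K_def ..
  have K1d: "K1 = ds @ [East]" unfolding K1_def ..
  have p0d: "p0 = tile_pos ds (length ds)" unfolding p0_def L_def ..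
  have t1a: "QQ K {} = QQ K1 {} + QQ K1 ({} \<union> {uu East p1, vv p1})"
    using QQ_a[of East K1 "{}"] unfolding Kd[symmetric] p1_def[symmetric] by simp
  have e1: "{uu East p1, vv p1} = {uu' East p0, vv' East p0}" unfolding p1xy p0xy by (simp add: vv_def ac_simps)
  have t1b: "QQ K1 ({} \<union> {uu' East p0, vv' East p0}) = QQ ds {}"
    using QQ_b[of East ds "{}"] unfolding K1d[symmetric] p0d[symmetric] by simp
  have t1c: "QQ K1 {} = QQ ds {} + QQ ds ({} \<union> {uu East p0, vv p0})"
    using QQ_a[of East ds "{}"] unfolding K1d[symmetric] p0d[symmetric] by simp
  have e2: "{uu East p0, vv p0} = east_edge p0" unfolding p0xy by (simp add: vv_def east_edge_def)
  have T1: "QQ K {} = 2 * QQ ds {} + QQ ds (east_edge p0)"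
    using t1a t1b t1c unfolding e1 e2 by simp
  define S where "S = {(0::int, 0::int), (1, 0)}"
  have xyS: "?x \<union> ?y = (S \<union> {vv p1}) \<union> {vv' East p1}" unfolding S_def PQ p1xy by (auto simp: vv_def)
  have c4: "uu' East p1 \<notin> S \<union> {vv p1}" "vv' East p1 \<notin> S \<union> {vv p1}" "uu East p1 \<notin> S \<union> {vv p1}"
    unfolding S_def p1xy using xy by (auto simp: vv_def)
  have t4a: "QQ K ((S \<union> {vv p1}) \<union> {vv' East p1}) = QQ K1 ((S \<union> {vv p1}) \<union> {uu East p1})"
    using QQ_c[of East K1 "S \<union> {vv p1}"] c4 unfolding Kd[symmetric] p1_def[symmetric] by simp
  have e3: "(S \<union> {vv p1}) \<union> {uu East p1} = S \<union> {uu' East p0, vv' East p0}"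
    unfolding p1xy p0xy by (auto simp: vv_def)
  have c5: "uu' East p0 \<notin> S" "vv' East p0 \<notin> S" unfolding S_def p0xy using xy by auto
  have t4b: "QQ K1 (S \<union> {uu' East p0, vv' East p0}) = QQ ds S"
    using QQ_b[of East ds S] c5 unfolding K1d[symmetric] p0d[symmetric] by simp
  have hS: "hh p0 ` S = north_edge p0" unfolding S_def p0xy by (auto simp: hh_def north_edge_def)
  have t4c: "QQ ds S = QQ ds (north_edge p0)"
    using QQ_sym[OF pal, of S] unfolding p0d[symmetric] hS by simp
  have T4: "QQ K (?x \<union> ?y) = QQ ds (north_edge p0)"
    unfolding xyS t4a e3 t4b t4c ..
  have last: "QQ ds {} = QQ ds (north_edge p0) + QQ ds (east_edge p0)"
    unfolding p0d by (rule QQ_last)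
  show ?thesis unfolding band z1 z2 T1 T4 QQ_empty[symmetric] using last by simp
qed


lemma west_step_east: "west_edge (step East p) = east_edge p"
  by (cases p) (simp add: west_edge_def east_edge_def)
lemma south_step_north: "south_edge (step North p) = north_edge p"
  by (cases p) (simp add: south_edge_def north_edge_def)

lemma sfD:
  assumes "is_sign_function ds f" "i \<le> length ds"
  shows "f (north_edge (tile_pos ds i)) = f (west_edge (tile_pos ds i))"
    "f (south_edge (tile_pos ds i)) = f (east_edge (tile_pos ds i))"
    "f (north_edge (tile_pos ds i)) = (\<not> f (south_edge (tile_pos ds i)))"
proof -
  have H: "i < ntiles ds" using assms(2) unfolding ntiles_def by simp
  have "let p = tile_pos ds i in f (north_edge p) = f (west_edge p) \<and> f (south_edge p) = f (east_edge p)
        \<and> f (north_edge p) \<noteq> f (south_edge p)"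
    using assms(1) H unfolding is_sign_function_def by blast
  then show "f (north_edge (tile_pos ds i)) = f (west_edge (tile_pos ds i))"
    "f (south_edge (tile_pos ds i)) = f (east_edge (tile_pos ds i))"
    "f (north_edge (tile_pos ds i)) = (\<not> f (south_edge (tile_pos ds i)))"
    unfolding Let_def by auto
qed

lemma sf_step:
  assumes sf: "is_sign_function ds f" and i: "i < length ds"
  shows "f (south_edge (tile_pos ds (Suc i))) = (\<not> f (south_edge (tile_pos ds i)))"
proof (cases "ds ! i")
  case East
  then have t: "tile_pos ds (Suc i) = step East (tile_pos ds i)" by simp
  have "f (south_edge (tile_pos ds (Suc i))) = (\<not> f (north_edge (tile_pos ds (Suc i))))"
    using sfD(3)[OF sf, of "Suc i"] i by simp
  also have "f (north_edge (tile_pos ds (Suc i))) = f (west_edge (tile_pos ds (Suc i)))"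
    using sfD(1)[OF sf, of "Suc i"] i by simp
  also have "west_edge (tile_pos ds (Suc i)) = east_edge (tile_pos ds i)" unfolding t by (rule west_step_east)
  also have "f (east_edge (tile_pos ds i)) = f (south_edge (tile_pos ds i))"
    using sfD(2)[OF sf, of i] i by simp
  finally show ?thesis .
next
  case North
  then have t: "tile_pos ds (Suc i) = step North (tile_pos ds i)" by simp
  show ?thesis unfolding t south_step_north using sfD(3)[OF sf, of i] i by simp
qed

lemma sf_south:
  assumes sf: "is_sign_function ds f"
  shows "i \<le> length ds \<Longrightarrow> f (south_edge (tile_pos ds i)) = (f (south_edge (tile_pos ds 0)) = even i)"
proof (induction i)
  case 0 then show ?case by simp
next
  case (Suc i)
  then show ?case using sf_step[OF sf, of i] by simp
qed

lemma sf_int: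
  assumes sf: "is_sign_function ds f" and i: "i < length ds"
  shows "f (interior_edge ds (Suc i)) = (if ds ! i = North then \<not> f (south_edge (tile_pos ds i)) else f (south_edge (tile_pos ds i)))"
  using sfD[OF sf, of i] i unfolding interior_edge_def by auto

definition dirOf :: "bool list \<Rightarrow> nat \<Rightarrow> dir" where
  "dirOf P i = (if P ! Suc i = (P ! 0 = even i) then East else North)"

definition slist :: "dir list \<Rightarrow> (edge \<Rightarrow> bool) \<Rightarrow> edge \<Rightarrow> bool list" where
  "slist ds f ed = map f ([south_edge (tile_pos ds 0)] @ map (interior_edge ds) [1..<ntiles ds] @ [ed])"

lemma slist_len: "length (slist ds f ed) = length ds + 2"
  unfolding slist_def ntiles_def by (simp del: upt_Suc)

lemma slist_0: "slist ds f ed ! 0 = f (south_edge (tile_pos ds 0))"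
  unfolding slist_def by simp

lemma slist_Suc: "i < length ds \<Longrightarrow> slist ds f ed ! Suc i = f (interior_edge ds (Suc i))"
  unfolding slist_def ntiles_def by (simp add: nth_append del: upt_Suc)

lemma slist_last: "slist ds f ed ! Suc (length ds) = f ed"
  unfolding slist_def ntiles_def by (simp add: nth_append del: upt_Suc)

lemma dir_from_slist:
  assumes sf: "is_sign_function ds f" and i: "i < length ds"
  shows "ds ! i = dirOf (slist ds f ed) i"
proof -
  have "f (south_edge (tile_pos ds i)) = (f (south_edge (tile_pos ds 0)) = even i)"
    using sf_south[OF sf] i by simp
  then show ?thesis
    unfolding dirOf_def slist_0 slist_Suc[OF i] sf_int[OF sf i]
    by (cases "ds ! i") auto
qed

lemma sign_pattern_neg: "sign_pattern c (\<not> s) = map Not (sign_pattern c s)"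
  unfolding sign_pattern_def map_concat map_map
  by (rule arg_cong[where f = concat], rule map_cong) auto

lemma sign_pattern_len: "length (sign_pattern c s) = sum_list c"
proof -
  have "length (sign_pattern c s) = sum_list (map (\<lambda>k. c ! k) [0..<length c])"
    unfolding sign_pattern_def by (simp add: length_concat o_def)
  also have "map (\<lambda>k. c ! k) [0..<length c] = c" by (rule map_nth)
  finally show ?thesis .
qed

lemma dirOf_neg: "Suc i < length P \<Longrightarrow> dirOf (map Not P) i = dirOf P i"
proof -
  assume a: "Suc i < length P"
  then have "0 < length P" by linarith
  then have e1: "map Not P ! 0 = (\<not> P ! 0)" and e2: "map Not P ! Suc i = (\<not> P ! Suc i)" using a by simp_all
  show ?thesis unfolding dirOf_def e1 e2 by (cases "P ! 0"; cases "P ! Suc i"; simp)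
qed

lemma prop_char:
  assumes pr: "cf_snake_prop c ds"
  shows "ds = map (dirOf (sign_pattern c True)) [0..<sum_list c - 2]"
proof -
  obtain f ed s where sf: "is_sign_function ds f" and W: "slist ds f ed = sign_pattern c s"
    and n: "ntiles ds = sum_list c - 1"
    using pr unfolding cf_snake_prop_def slist_def by blast
  have L: "length ds = sum_list c - 2" using n unfolding ntiles_def by simp
  have lenP: "length (sign_pattern c True) = length ds + 2"
    using W slist_len[of ds f ed] sign_pattern_len[of c s] sign_pattern_len[of c True] by simp
  have d: "ds ! i = dirOf (sign_pattern c True) i" if i: "i < length ds" for i
  proof -
    have "ds ! i = dirOf (sign_pattern c s) i" using dir_from_slist[OF sf i, of ed] W by simp
    also have "\<dots> = dirOf (sign_pattern c True) i"
    proof (cases s)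
      case False
      then have "sign_pattern c s = map Not (sign_pattern c True)" using sign_pattern_neg[of c True] by simp
      then show ?thesis using dirOf_neg[of i "sign_pattern c True"] i lenP by simp
    qed simp
    finally show ?thesis .
  qed
  show ?thesis by (rule nth_equalityI) (simp_all add: L[symmetric] d)
qed


definition f0 :: "edge \<Rightarrow> bool" where
  "f0 e = ((\<exists>a b. e = {(a, b), (a + 1, b)} \<and> even (a + b)) \<or> (\<exists>a b. e = {(a, b), (a, b + 1)} \<and> odd (a + b)))"

lemma hor_eq: "{(a::int, b::int), (a + 1, b)} = {(c, d), (c + 1, d)} \<longleftrightarrow> a = c \<and> b = d"
  by (auto simp: doubleton_eq_iff)
lemma ver_eq: "{(a::int, b::int), (a, b + 1)} = {(c, d), (c, d + 1)} \<longleftrightarrow> a = c \<and> b = d"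
  by (auto simp: doubleton_eq_iff)
lemma hv_neq: "{(a::int, b::int), (a + 1, b)} \<noteq> {(c, d), (c, d + 1)}"
  by (auto simp: doubleton_eq_iff)

lemma f0_h: "f0 {(a, b), (a + 1, b)} = even (a + b)"
  unfolding f0_def hor_eq using hv_neq by blast
lemma f0_v: "f0 {(a, b), (a, b + 1)} = odd (a + b)"
  unfolding f0_def ver_eq using hv_neq by metis

lemma f0_edges:
  "f0 (south_edge (a, b)) = even (a + b)" "f0 (north_edge (a, b)) = odd (a + b)"
  "f0 (west_edge (a, b)) = odd (a + b)" "f0 (east_edge (a, b)) = even (a + b)"
proof -
  show "f0 (south_edge (a, b)) = even (a + b)" unfolding south_edge_def using f0_h by simp
  have "f0 (north_edge (a, b)) = even (a + (b + 1))" unfolding north_edge_def using f0_h[of a "b + 1"] by simp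
  then show "f0 (north_edge (a, b)) = odd (a + b)" by simp
  show "f0 (west_edge (a, b)) = odd (a + b)" unfolding west_edge_def using f0_v by simp
  have "f0 (east_edge (a, b)) = odd (a + 1 + b)" unfolding east_edge_def using f0_v[of "a + 1" b] by simp
  then show "f0 (east_edge (a, b)) = even (a + b)" by simp
qed

lemma f0_sign: "is_sign_function ds f0"
  unfolding is_sign_function_def Let_def
proof (intro allI impI)
  fix i
  obtain a b where "tile_pos ds i = (a, b)" by (cases "tile_pos ds i")
  then show "f0 (north_edge (tile_pos ds i)) = f0 (west_edge (tile_pos ds i)) \<and>
      f0 (south_edge (tile_pos ds i)) = f0 (east_edge (tile_pos ds i)) \<and>
      f0 (north_edge (tile_pos ds i)) \<noteq> f0 (south_edge (tile_pos ds i))"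
    by (simp add: f0_edges)
qed

lemma sign_pattern_0: "c \<noteq> [] \<Longrightarrow> 0 < c ! 0 \<Longrightarrow> sign_pattern c s ! 0 = s"
proof -
  assume c: "c \<noteq> []" "0 < c ! 0"
  then obtain m where m: "length c = Suc m" by (cases c) auto
  have "[0..<length c] = 0 # [1..<length c]" unfolding m by (simp add: upt_conv_Cons)
  then have "sign_pattern c s = replicate (c ! 0) s @ concat (map (\<lambda>k. replicate (c ! k) (if even k then s else \<not> s)) [1..<length c])"
    unfolding sign_pattern_def by simp
  then show ?thesis using c(2) by (simp add: nth_append)
qed

lemma exists_prop:
  assumes c: "c \<noteq> []" "0 < c ! 0" and n: "2 \<le> sum_list c"
  defines "P \<equiv> sign_pattern c True"
  shows "cf_snake_prop c (map (dirOf P) [0..<sum_list c - 2])"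
proof -
  define ds where "ds = map (dirOf P) [0..<sum_list c - 2]"
  define L where "L = length ds"
  have L: "L = sum_list c - 2" unfolding L_def ds_def by simp
  have lenP: "length P = L + 2" unfolding P_def sign_pattern_len L using n by simp
  have P0: "P ! 0 = True" unfolding P_def using sign_pattern_0[OF c] by simp
  have sf: "is_sign_function ds f0" by (rule f0_sign)
  have s0: "f0 (south_edge (tile_pos ds 0)) = True" by (simp add: f0_edges)
  define ed where "ed = (if P ! Suc L = f0 (south_edge (tile_pos ds L)) then east_edge (tile_pos ds L) else north_edge (tile_pos ds L))"
  have ed_in: "ed \<in> {north_edge (tile_pos ds (ntiles ds - 1)), east_edge (tile_pos ds (ntiles ds - 1))}"
    unfolding ed_def ntiles_def L_def by simp
  have fed: "f0 ed = P ! Suc L"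
    using sfD[OF sf, of L] unfolding ed_def L_def by auto
  have slP: "slist ds f0 ed = P"
  proof (rule nth_equalityI)
    show "length (slist ds f0 ed) = length P" using slist_len lenP L_def by simp
  next
    fix k assume k: "k < length (slist ds f0 ed)"
    then have kL: "k < L + 2" using slist_len L_def by simp
    show "slist ds f0 ed ! k = P ! k"
    proof (cases k)
      case 0 then show ?thesis using slist_0 s0 P0 by simp
    next
      case (Suc i)
      show ?thesis
      proof (cases "i < L")
        case True
        have Si: "f0 (south_edge (tile_pos ds i)) = even i" using sf_south[OF sf, of i] s0 True L_def by simp
        have di: "ds ! i = dirOf P i" unfolding ds_def using True L by simp
        have "slist ds f0 ed ! Suc i = f0 (interior_edge ds (Suc i))" using slist_Suc True L_def by simp
        also have "\<dots> = (if ds ! i = North then \<not> even i else even i)"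
          using sf_int[OF sf, of i] True L_def Si by simp
        also have "\<dots> = P ! Suc i" unfolding di dirOf_def P0 by auto
        finally show ?thesis using Suc by simp
      next
        case False
        then have "i = L" using kL Suc by simp
        then show ?thesis using Suc slist_last fed L_def by simp
      qed
    qed
  qed
  have nt: "ntiles ds = sum_list c - 1" unfolding ntiles_def using L L_def n by simp
  have m: "map f0 ([south_edge (tile_pos ds 0)] @ map (interior_edge ds) [1..<ntiles ds] @ [ed]) = sign_pattern c True"
    using slP unfolding slist_def P_def .
  have "\<exists>f ed s. is_sign_function ds f \<and>
        ed \<in> {north_edge (tile_pos ds (ntiles ds - 1)), east_edge (tile_pos ds (ntiles ds - 1))} \<and>
        map f ([south_edge (tile_pos ds 0)] @ map (interior_edge ds) [1..<ntiles ds] @ [ed]) = sign_pattern c s"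
    using sf ed_in m by blast
  then show ?thesis unfolding cf_snake_prop_def ds_def[symmetric] using nt by blast
qed

lemma cf_snake_eq:
  assumes c: "c \<noteq> []" "0 < c ! 0" and n: "2 \<le> sum_list c"
  shows "cf_snake c = map (dirOf (sign_pattern c True)) [0..<sum_list c - 2]"
  unfolding cf_snake_def
  by (rule the_equality) (rule exists_prop[OF c n], erule prop_char)


lemma Fsum:
  fixes p q j :: nat
  assumes cop: "coprime p q" and j: "0 < j" "j < p"
  shows "(j * q) div p + ((p - j) * q) div p + 1 = q"
proof -
  define a where "a = j * q"
  define b where "b = (p - j) * q"
  have ab: "a + b = p * q" unfolding a_def b_def using j by (simp add: add_mult_distrib[symmetric])
  have p0: "0 < p" using j by simp
  have nd: "\<not> p dvd k * q" if "0 < k" "k < p" for k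
  proof
    assume "p dvd k * q"
    then have "p dvd k" using cop by (simp add: coprime_dvd_mult_left_iff)
    then show False using that by (auto dest: dvd_imp_le)
  qed
  have am: "a mod p \<noteq> 0" unfolding a_def using nd[OF j] by (simp add: dvd_eq_mod_eq_0)
  have bm: "b mod p \<noteq> 0" unfolding b_def using nd[of "p - j"] j by (simp add: dvd_eq_mod_eq_0)
  have r0: "(a mod p + b mod p) mod p = 0"
    using ab by (metis mod_add_eq mod_mult_self1_is_0 mult.commute)
  have rlt: "a mod p + b mod p < 2 * p" using p0 mod_less_divisor[OF p0, of a] mod_less_divisor[OF p0, of b] by linarith
  have rgt: "0 < a mod p + b mod p" using am by simp
  have "p dvd (a mod p + b mod p)" using r0 by (simp add: dvd_eq_mod_eq_0)
  then obtain k where k: "a mod p + b mod p = p * k" by (rule dvdE)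
  have "k < 2" using rlt k p0 by (metis mult_less_cancel1 mult.commute)
  moreover have "k \<noteq> 0" using rgt k by auto
  ultimately have "k = 1" by simp
  then have r: "a mod p + b mod p = p" using k by simp
  have ea: "p * (a div p) + a mod p = a" by (rule mult_div_mod_eq)
  have eb: "p * (b div p) + b mod p = b" by (rule mult_div_mod_eq)
  have "p * (a div p) + p * (b div p) + p = p * q" using ea eb r ab by linarith
  then have "p * (a div p + b div p + 1) = p * q" by (simp add: distrib_left)
  then have "a div p + b div p + 1 = q" using mult_left_cancel[of p "a div p + b div p + 1" q] p0 by simp
  then show ?thesis unfolding a_def b_def .
qed

lemma mv_pal:
  fixes p q i :: nat
  assumes cop: "coprime p q" and pq: "0 < p" "p < q" and i: "1 \<le> i" "i \<le> p"
  shows "markov_v p q (p + 1 - i) = markov_v p q i"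
proof -
  define F where "F j = (j * q) div p" for j
  have Fs: "F j + F (p - j) + 1 = q" if "0 < j" "j < p" for j using Fsum[OF cop that] unfolding F_def .
  have F0: "F 0 = 0" unfolding F_def by simp
  have Fmono: "F j \<le> F k" if "j \<le> k" for j k
    unfolding F_def by (rule div_le_mono) (use that in simp)
  have mv1: "markov_v p q j = F j - F (j - 1)" if "j < p" for j unfolding markov_v_def F_def using that by simp
  have mvp: "markov_v p q p = q - 1 - F (p - 1)" unfolding markov_v_def F_def by simp
  show ?thesis
  proof (cases "p = 1")
    case True then show ?thesis using i by simp
  next
    case False
    then have p1: "1 < p" using pq by simp
    have e1: "markov_v p q p = markov_v p q 1"
    proof -
      have "F 1 + F (p - 1) + 1 = q" using Fs[of 1] p1 by simp
      then show ?thesis using mvp mv1[of 1] p1 F0 by simp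
    qed
    consider "i = 1" | "i = p" | "1 < i \<and> i < p" using i by linarith
    then show ?thesis
    proof cases
      case 1 then show ?thesis using e1 by simp
    next
      case 2 then show ?thesis using e1 by simp
    next
      case 3
      then have i1: "0 < i - 1" "i - 1 < p" "0 < i" "i < p" by auto
      have k: "p + 1 - i < p" "p + 1 - i - 1 = p - i" "p + 1 - i = p - (i - 1)" using 3 by auto
      have a: "F (i - 1) + F (p - (i - 1)) + 1 = q" using Fs[OF i1(1,2)] .
      have b: "F i + F (p - i) + 1 = q" using Fs[OF i1(3,4)] .
      have m: "F (i - 1) \<le> F i" using Fmono by simp
      have "markov_v p q (p + 1 - i) = F (p + 1 - i) - F (p + 1 - i - 1)" using mv1[OF k(1)] .
      also have "\<dots> = F (p + 1 - i) - F (p - i)" unfolding k(2) ..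
      also have "\<dots> = F (p - (i - 1)) - F (p - i)" unfolding k(3) ..
      also have "\<dots> = F i - F (i - 1)" using a b m by linarith
      also have "\<dots> = markov_v p q i" using mv1[OF i1(4)] by simp
      finally show ?thesis .
    qed
  qed
qed

definition blk :: "nat \<Rightarrow> nat list" where "blk v = [2] @ replicate (2 * (v - 1)) 1 @ [2]"

lemma markov_seq_blk: "markov_seq p q = concat (map (\<lambda>i. blk (markov_v p q i)) [1..<p + 1])"
  unfolding markov_seq_def blk_def ..

lemma rev_blk: "rev (blk v) = blk v" unfolding blk_def by simp

lemma even_len_concat: "(\<And>x. x \<in> set xs \<Longrightarrow> even (length x)) \<Longrightarrow> even (length (concat xs))"
  by (induction xs) auto

lemma even_sum_concat: "(\<And>x. x \<in> set xs \<Longrightarrow> even (sum_list x)) \<Longrightarrow> even (sum_list (concat xs :: nat list))"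
  by (induction xs) auto

lemma markov_props:
  fixes p q :: nat
  assumes cop: "coprime p q" and pq: "0 < p" "p < q"
  defines "c \<equiv> markov_seq p q"
  shows "c \<noteq> []" "0 < c ! 0" "2 \<le> sum_list c" "rev c = c" "even (length c)" "even (sum_list c)"
proof -
  have up0: "[1..<p + 1] = 1 # [Suc 1..<p + 1]" by (rule upt_conv_Cons) (use pq in simp)
  have e2: "Suc 1 = (2::nat)" by simp
  have up: "[1..<p + 1] = 1 # [2..<p + 1]" using up0 unfolding e2 .
  have c1: "c = 2 # (replicate (2 * (markov_v p q 1 - 1)) 1 @ [2]) @ concat (map (\<lambda>i. blk (markov_v p q i)) [2..<p + 1])"
    unfolding c_def markov_seq_blk up by (simp add: blk_def)
  show "c \<noteq> []" using c1 by simp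
  show "0 < c ! 0" using c1 by simp
  show "2 \<le> sum_list c" using c1 by simp
  show "even (length c)" unfolding c_def markov_seq_blk by (rule even_len_concat) (auto simp: blk_def)
  show "even (sum_list c)" unfolding c_def markov_seq_blk by (rule even_sum_concat) (auto simp: blk_def sum_list_replicate)
  have mr: "map rev (rev (map (\<lambda>i. blk (f i)) xs)) = map (\<lambda>i. blk (f i)) (rev xs)" for f :: "nat \<Rightarrow> nat" and xs
    by (simp add: rev_map rev_blk)
  have "rev c = concat (map rev (rev (map (\<lambda>i. blk (markov_v p q i)) [1..<p + 1])))"
    unfolding c_def markov_seq_blk by (rule rev_concat)
  also have "\<dots> = concat (map (\<lambda>i. blk (markov_v p q i)) (rev [1..<p + 1]))"
    unfolding mr ..
  also have "map (\<lambda>i. blk (markov_v p q i)) (rev [1..<p + 1]) = map (\<lambda>i. blk (markov_v p q i)) [1..<p + 1]"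
  proof (rule nth_equalityI)
    show "length (map (\<lambda>i. blk (markov_v p q i)) (rev [1..<p + 1])) = length (map (\<lambda>i. blk (markov_v p q i)) [1..<p + 1])" by (simp del: upt_Suc)
  next
    fix k assume "k < length (map (\<lambda>i. blk (markov_v p q i)) (rev [1..<p + 1]))"
    then have k: "k < p" by (simp del: upt_Suc)
    have r: "rev [1..<p + 1] ! k = p - k" using k by (simp add: rev_nth del: upt_Suc)
    have "markov_v p q (p + 1 - (k + 1)) = markov_v p q (k + 1)" by (rule mv_pal[OF cop pq]) (use k in auto)
    then show "map (\<lambda>i. blk (markov_v p q i)) (rev [1..<p + 1]) ! k = map (\<lambda>i. blk (markov_v p q i)) [1..<p + 1] ! k"
      using k r by (simp del: upt_Suc)
  qed
  finally show "rev c = c" unfolding c_def markov_seq_blk .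
qed

lemma rev_sign_pattern:
  assumes rc: "rev c = c" and ev: "even (length c)"
  shows "rev (sign_pattern c s) = map Not (sign_pattern c s)"
proof -
  define n where "n = length c"
  define g where "g k = replicate (c ! k) (if even k then s else \<not> s)" for k
  have sp: "sign_pattern c s = concat (map g [0..<n])" unfolding sign_pattern_def g_def n_def ..
  have "rev (sign_pattern c s) = concat (map (rev \<circ> g) (rev [0..<n]))"
    unfolding sp by (simp add: rev_concat rev_map)
  also have "map (rev \<circ> g) (rev [0..<n]) = map (map Not \<circ> g) [0..<n]"
  proof (rule nth_equalityI)
    show "length (map (rev \<circ> g) (rev [0..<n])) = length (map (map Not \<circ> g) [0..<n])" by simp
  next
    fix k assume "k < length (map (rev \<circ> g) (rev [0..<n]))"
    then have k: "k < n" by simp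
    have r: "rev [0..<n] ! k = n - Suc k" using k by (simp add: rev_nth)
    have cc: "c ! (n - Suc k) = c ! k" using rc k unfolding n_def by (metis rev_nth)
    have ee: "even (n - Suc k) = odd k" using ev k unfolding n_def by (simp add: even_diff_nat)
    show "map (rev \<circ> g) (rev [0..<n]) ! k = map (map Not \<circ> g) [0..<n] ! k"
      using k r cc ee by (simp add: g_def)
  qed
  also have "concat (map (map Not \<circ> g) [0..<n]) = map Not (sign_pattern c s)"
    unfolding sp by (simp add: map_concat)
  finally show ?thesis .
qed

lemma dirs_pal:
  assumes rP: "rev P = map Not P" and ev: "even (length P)"
  defines "L \<equiv> length P - 2"
  shows "rev (map (dirOf P) [0..<L]) = map (dirOf P) [0..<L]"
proof (rule nth_equalityI)
  show "length (rev (map (dirOf P) [0..<L])) = length (map (dirOf P) [0..<L])" by simp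
next
  fix i assume "i < length (rev (map (dirOf P) [0..<L]))"
  then have i: "i < L" by simp
  have n: "length P = L + 2" using i unfolding L_def by simp
  have neg: "P ! (length P - Suc k) = (\<not> P ! k)" if "k < length P" for k
  proof -
    have "rev P ! k = P ! (length P - Suc k)" using that by (simp add: rev_nth)
    moreover have "map Not P ! k = (\<not> P ! k)" using that by simp
    ultimately show ?thesis using rP by simp
  qed
  have lhs: "rev (map (dirOf P) [0..<L]) ! i = dirOf P (L - Suc i)" using i by (simp add: rev_nth)
  have a: "P ! Suc (L - Suc i) = (\<not> P ! Suc i)"
  proof -
    have "Suc (L - Suc i) = length P - Suc (Suc i)" using i n by simp
    then show ?thesis using neg[of "Suc i"] i n by simp
  qed
  have evL: "even L" using ev n by simp
  have b: "even (L - Suc i) = odd i" using evL i by (simp add: even_diff_nat)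
  show "rev (map (dirOf P) [0..<L]) ! i = map (dirOf P) [0..<L] ! i"
    unfolding lhs using i a b by (simp add: dirOf_def) (cases "P ! 0"; cases "P ! Suc i"; simp)
qed

lemma markov_snake_props:
  fixes p q :: nat
  assumes cop: "coprime p q" and pq: "0 < p" "p < q"
  shows "rev (markov_snake p q) = markov_snake p q" "even (length (markov_snake p q))"
proof -
  define c where "c = markov_seq p q"
  note mp = markov_props[OF cop pq, folded c_def]
  define P where "P = sign_pattern c True"
  have ms: "markov_snake p q = map (dirOf P) [0..<length P - 2]"
    unfolding markov_snake_def c_def[symmetric] P_def sign_pattern_len
    by (rule cf_snake_eq[OF mp(1-3)])
  have lP: "length P = sum_list c" unfolding P_def by (rule sign_pattern_len)
  have rP: "rev P = map Not P" unfolding P_def by (rule rev_sign_pattern[OF mp(4,5)])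
  have evP: "even (length P)" using lP mp(6) by simp
  show "rev (markov_snake p q) = markov_snake p q" unfolding ms by (rule dirs_pal[OF rP evP])
  show "even (length (markov_snake p q))" unfolding ms using evP lP mp(3) by simp
qed


theorem theorem4p10:
  fixes p q :: nat
  assumes "0 < p" and "p < q" and "coprime p q"
  shows "card (perfect_matchings (band_vertices (markov_snake p q)) (band_edges (markov_snake p q)))
         = 3 * card (perfect_matchings (snake_vertices (markov_snake p q)) (snake_edges (markov_snake p q)))"
proof -
  note mp = markov_snake_props[OF assms(3) assms(1) assms(2)]
  show ?thesis by (rule band_count[OF mp(1) mp(2)])
qed

end
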